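(* For every $k$ there are complex numbers $\alpha_m(k)$, $m\in\mathbb Z/D\mathbb Z$, such that $$Z^0_k=\sum_{m\in\mathbb Z/D\mathbb Z}\alpha_m(k)\,\Psi_{2km},$$ and $\alpha_0(k)=\frac{i}{\sqrt2}+O(k^{-\infty})$.
   Context: Standing setup. $(E,\omega)$ is a real $2$-dimensional symplectic vector space with a compatible linear complex structure $j$; $K_j=\{\alpha\in E^*\otimes\mathbb C:\alpha(j\cdot)=i\alpha\}$. A half-form line is a complex line $\delta$ with an isomorphism $\varphi:\delta^{\otimes2}\to K_j$; $\delta$ carries the Hermitian metric making $\varphi$ an isometry. For $v\in E\setminus\{0\}$, $\Omega_v$ denotes a vector of $\delta$ with $\varphi(\Omega_v^2)(v)=1$ (unique up to sign). $L\to E$ is the trivial Hermitian line bundle with connection $d-i\alpha$, where $\alpha_x(y)=\frac12\omega(x,y)$, and the compatible holomorphic structure; sections of $L^k\otimes\delta$ are identified with functions $E\to\delta$. For $k\in\mathbb Z_{>0}$ and $x\in E$, $T^*_x$ acts on sections of $L^k\otimes\delta$ by $(T^*_x\Psi)(y)=e^{-\frac{ik}{2}\omega(x,y)}\Psi(x+y)$. For a lattice $\Lambda\subset E$, $\mathcal H^\Lambda_k$ is the space of holomorphic sections $\Psi$ of $L^k\otimes\delta$ with $T^*_x\Psi=\Psi$ for all $x\in\Lambda$, with inner product $\langle\Psi_1,\Psi_2\rangle=\int_F\langle\Psi_1,\Psi_2\rangle_\delta\,|\omega|$ ($F$ a fundamental domain of $\Lambda$). For sequences, $O(k^{-\infty})$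 means $O(k^{-N})$ for every $N$. Knot state. Fix relatively prime positive integers $a,b$; $D=2ab$. Fix a basis $(\lambda,\mu)$ of $E$ with $\omega(\mu,\lambda)=4\pi$. $\mathcal H_k=\mathcal H_k^{\lambda\mathbb Z\oplus\mu\mathbb Z}$; $M=T^*_{\mu/2k}$, $L=T^*_{-\lambda/2k}$ (operators), $q=e^{i\pi/k}$, $q^{s/D}=e^{i\pi s/(kD)}$. Fix $\Omega_\mu$; $(\xi_\ell)_{\ell\in\mathbb Z/2k\mathbb Z}$ is the orthonormal basis of $\mathcal H_k$ with $M\xi_\ell=q^\ell\xi_\ell$, $L\xi_\ell=\xi_{\ell-1}$, $\xi_0(0)\in\mathbb R_{>0}\Omega_\mu$. $Z^0_k=-\frac{i}{2\sqrt k}\sum_{\ell\in\mathbb Z/2k\mathbb Z}\xi_\ell$. Second lattice. $\Omega_\lambda$ is the (fixed, $k$-independent) choice of sign with $Z^0_k(0)=\frac{e^{3i\pi/4}}{\sqrt2}(\frac{k}{2\pi})^{1/4}\Omega_\lambda+O(k^{-\infty})$. $R_D=D\mu\mathbb Z\oplus\lambda\mathbb Z$, $\mathcal H_{D,k}=\mathcal H_k^{R_D}\supset\mathcal H_k$ ($\dim=2kD$). $S=T^*_{-\lambda/2kD}$, $R=T^*_{(D\mu-2\lambda)/2kD}$. $(\Psi_n)_{n\in\mathbb Z/2kD\mathbb Z}$ is the orthonormal basis of $\mathcal H_{D,k}$ with $S\Psi_n=q^{n/D}\Psi_n$, $R\Psi_n=\Psi_{n+1}$ and phase such that $\Psi_0(0)=e^{i\pi/4}(\frac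 k{2\pi})^{1/4}\Omega_\lambda+O(k^{-\infty})$. *)

theory Defs
  imports "HOL-Analysis.Analysis"
begin

text \<open>Concrete model (up to isomorphism) of the standing setup:
  E = complex plane as a real 2-dimensional vector space, j = multiplication by i,
  omega(x,y) = Im(cnj x * y)  (so omega(x, j x) = |x|^2 > 0, compatible).
  K_j = complex-linear functionals y |-> c*y, with the metric induced by g = omega(.,j.),
  so that |c dz| = sqrt 2 |c|.
  Half-form line: delta = complex numbers with phi(u (x) u')(y) = u*u'*y / sqrt 2;
  the metric making phi an isometry is then the standard one |u|.
  Sections of L^k (x) delta are functions complex => complex.\<close>

definition omega :: "complex \<Rightarrow> complex \<Rightarrow> real" where
  "omega x y = Im (cnj x * y)"

text \<open>phi(Omega^2)(v) as an element of K_j evaluated at v.\<close>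
definition phi_sq :: "complex \<Rightarrow> complex \<Rightarrow> complex" where
  "phi_sq u v = u^2 * v / complex_of_real (sqrt 2)"

text \<open>Holomorphic sections of L^k (x) delta, where L has connection d - i alpha,
  alpha_x(y) = omega(x,y)/2: the (0,1)-part of the covariant derivative is
  dbar + (k/4) z dzbar, whose kernel consists of exp(-k|z|^2/4) times entire functions.\<close>
definition hol_sec :: "nat \<Rightarrow> (complex \<Rightarrow> complex) \<Rightarrow> bool" where
  "hol_sec k f \<longleftrightarrow> (\<exists>g. g holomorphic_on UNIV \<and>
      (\<forall>z. f z = exp (complex_of_real (- real k * (cmod z)^2 / 4)) * g z))"

definition Tstar :: "nat \<Rightarrow> complex \<Rightarrow> (complex \<Rightarrow> complex) \<Rightarrow> (complex \<Rightarrow> complex)" where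
  "Tstar k x f = (\<lambda>y. exp (- \<i> * complex_of_real (real k / 2 * omega x y)) * f (x + y))"

definition lattice :: "complex \<Rightarrow> complex \<Rightarrow> complex set" where
  "lattice u v = {of_int m * u + of_int n * v | m n. True}"

definition fund_dom :: "complex \<Rightarrow> complex \<Rightarrow> complex set" where
  "fund_dom u v = {of_real s * u + of_real t * v | s t. 0 \<le> s \<and> s < 1 \<and> 0 \<le> t \<and> t < 1}"

definition Hspace :: "nat \<Rightarrow> complex \<Rightarrow> complex \<Rightarrow> (complex \<Rightarrow> complex) set" where
  "Hspace k u v = {f. hol_sec k f \<and> (\<forall>x\<in>lattice u v. Tstar k x f = f)}"

text \<open>Inner product: integral over a fundamental domain w.r.t. |omega| = Lebesgue measure.\<close>
definition ip :: "complex \<Rightarrow> complex \<Rightarrow> (complex \<Rightarrow> complex) \<Rightarrow> (complex \<Rightarrow> complex) \<Rightarrow> complex" where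
  "ip u v f g = (LINT z:fund_dom u v|lborel. f z * cnj (g z))"

text \<open>(e k)_{n in Z/NZ} (indexed by int, N-periodic) is an orthonormal basis of the
  given space H of functions.\<close>
definition is_onb :: "(complex \<Rightarrow> complex) set \<Rightarrow> complex \<Rightarrow> complex \<Rightarrow> nat \<Rightarrow> (int \<Rightarrow> complex \<Rightarrow> complex) \<Rightarrow> bool" where
  "is_onb H u v N e \<longleftrightarrow>
     (\<forall>n. e (n + int N) = e n) \<and>
     (\<forall>n. e n \<in> H) \<and>
     (\<forall>n\<in>{0..<int N}. \<forall>m\<in>{0..<int N}. ip u v (e n) (e m) = (if n = m then 1 else 0)) \<and>
     (\<forall>f\<in>H. \<exists>c. f = (\<lambda>z. \<Sum>n\<in>{0..<int N}. c n * e n z))"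

definition O_inf :: "(nat \<Rightarrow> complex) \<Rightarrow> bool" where
  "O_inf f \<longleftrightarrow> (\<forall>N::nat. \<exists>C. \<forall>\<^sub>F k in sequentially. cmod (f k) \<le> C * real k powr (- real N))"

end

theory Submission
  imports Defs
begin
lemma omega_add_left: "omega (x + y) z = omega x z + omega y z"
  by (simp add: omega_def algebra_simps)
lemma omega_add_right: "omega x (y + z) = omega x y + omega x z"
  by (simp add: omega_def algebra_simps)
lemma omega_scale_left: "omega (of_real r * x) z = r * omega x z"
  by (simp add: omega_def algebra_simps)
lemma omega_scale_right: "omega x (of_real r * z) = r * omega x z"
  by (simp add: omega_def algebra_simps)
lemma omega_self: "omega x x = 0"
  by (simp add: omega_def algebra_simps)
lemma omega_swap: "omega y x = - omega x y"
  by (simp add: omega_def algebra_simps)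
lemma omega_nat_self: "omega (of_nat j * x) x = 0"
  by (metis omega_scale_left omega_self of_real_of_nat_eq mult_zero_right)
lemma omega_zero_right[simp]: "omega x 0 = 0" by (simp add: omega_def)
lemma omega_neg_left: "omega (- x) z = - omega x z" by (simp add: omega_def)

lemma exp_mult_shuffle:
  fixes a b c d :: complex
  assumes "a + b = c + d"
  shows "exp a * (exp b * F) = exp c * (exp d * F)"
  by (metis assms exp_add mult.assoc)

lemma Tstar_comp:
  "Tstar k x (Tstar k y f) = (\<lambda>z. exp (- \<i> * complex_of_real (real k / 2 * omega y x)) * Tstar k (x + y) f z)"
proof
  fix z
  have e: "- \<i> * complex_of_real (real k / 2 * omega x z) + - \<i> * complex_of_real (real k / 2 * omega y (x + z))
     = - \<i> * complex_of_real (real k / 2 * omega y x) + - \<i> * complex_of_real (real k / 2 * omega (x+y) z)"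
    by (simp add: omega_add_left omega_add_right algebra_simps)
  have "Tstar k x (Tstar k y f) z = exp (- \<i> * complex_of_real (real k / 2 * omega x z)) *
      (exp (- \<i> * complex_of_real (real k / 2 * omega y (x + z))) * f (x + y + z))"
    by (simp add: Tstar_def add_ac)
  also have "\<dots> = exp (- \<i> * complex_of_real (real k / 2 * omega y x)) *
      (exp (- \<i> * complex_of_real (real k / 2 * omega (x+y) z)) * f (x + y + z))"
    by (rule exp_mult_shuffle[OF e])
  finally show "Tstar k x (Tstar k y f) z = exp (- \<i> * complex_of_real (real k / 2 * omega y x)) * Tstar k (x + y) f z"
    by (simp add: Tstar_def add_ac)
qed

lemma Tstar_comp0:
  assumes "omega y x = 0"
  shows "Tstar k x (Tstar k y f) = Tstar k (x + y) f"
  using assms by (simp add: Tstar_comp)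

lemma Tstar_zero[simp]: "Tstar k 0 f = f"
  by (simp add: Tstar_def omega_def)

lemma Tstar_at0: "Tstar k x f 0 = f x"
  by (simp add: Tstar_def)

lemma Tstar_cmult: "Tstar k x (\<lambda>z. c * f z) = (\<lambda>z. c * Tstar k x f z)"
  by (simp add: Tstar_def fun_eq_iff algebra_simps)

lemma Tstar_sum: "Tstar k x (\<lambda>z. \<Sum>n\<in>A. f n z) = (\<lambda>z. \<Sum>n\<in>A. Tstar k x (f n) z)"
  by (simp add: Tstar_def fun_eq_iff sum_distrib_left)

lemma norm_Tstar: "cmod (Tstar k x f y) = cmod (f (x + y))"
proof -
  have "cmod (exp (- \<i> * complex_of_real (real k / 2 * omega x y))) = 1"
    by (simp add: norm_exp)
  then show ?thesis by (simp add: Tstar_def norm_mult)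
qed

lemma Tstar_pow_eig:
  assumes "Tstar k x f = (\<lambda>z. w * f z)"
  shows "Tstar k (of_nat j * x) f = (\<lambda>z. w ^ j * f z)"
proof (induction j)
  case 0 then show ?case by simp
next
  case (Suc j)
  have "Tstar k (of_nat (Suc j) * x) f = Tstar k (x + of_nat j * x) f"
    by (simp add: algebra_simps)
  also have "\<dots> = Tstar k x (Tstar k (of_nat j * x) f)"
    by (rule Tstar_comp0[symmetric]) (rule omega_nat_self)
  also have "\<dots> = (\<lambda>z. w ^ j * Tstar k x f z)"
    by (simp only: Suc.IH Tstar_cmult)
  also have "\<dots> = (\<lambda>z. w ^ Suc j * f z)"
    using assms by (simp add: mult_ac)
  finally show ?case .
qed

lemma Tstar_pow_shift:
  assumes "\<And>n. Tstar k x (e n) = e (n + 1)"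
  shows "Tstar k (of_nat j * x) (e n) = e (n + int j)"
proof (induction j)
  case 0 then show ?case by simp
next
  case (Suc j)
  have "Tstar k (of_nat (Suc j) * x) (e n) = Tstar k (x + of_nat j * x) (e n)"
    by (simp add: algebra_simps)
  also have "\<dots> = Tstar k x (Tstar k (of_nat j * x) (e n))"
    by (rule Tstar_comp0[symmetric]) (rule omega_nat_self)
  also have "\<dots> = e (n + int (Suc j))"
    using Suc assms by (simp add: algebra_simps)
  finally show ?case .
qed

lemma hol_sec_lincomb:
  assumes "finite A" "\<And>n. n \<in> A \<Longrightarrow> hol_sec k (e n)"
  shows "hol_sec k (\<lambda>z. \<Sum>n\<in>A. c n * e n z)"
proof -
  have "\<forall>n\<in>A. \<exists>g. g holomorphic_on UNIV \<and> (\<forall>z. e n z = exp (complex_of_real (- real k * (cmod z)^2 / 4)) * g z)"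
    using assms(2) by (simp add: hol_sec_def)
  then obtain g where g: "\<And>n. n \<in> A \<Longrightarrow> g n holomorphic_on UNIV"
    "\<And>n z. n \<in> A \<Longrightarrow> e n z = exp (complex_of_real (- real k * (cmod z)^2 / 4)) * g n z"
    by metis
  have "(\<lambda>z. \<Sum>n\<in>A. c n * g n z) holomorphic_on UNIV"
    using g(1) by (intro holomorphic_intros) auto
  moreover have "\<forall>z. (\<Sum>n\<in>A. c n * e n z) = exp (complex_of_real (- real k * (cmod z)^2 / 4)) * (\<Sum>n\<in>A. c n * g n z)"
  proof
    fix z
    have "(\<Sum>n\<in>A. c n * e n z) = (\<Sum>n\<in>A. exp (complex_of_real (- real k * (cmod z)^2 / 4)) * (c n * g n z))"
      by (rule sum.cong) (auto simp: g(2))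
    then show "(\<Sum>n\<in>A. c n * e n z) = exp (complex_of_real (- real k * (cmod z)^2 / 4)) * (\<Sum>n\<in>A. c n * g n z)"
      by (simp add: sum_distrib_left)
  qed
  ultimately show ?thesis unfolding hol_sec_def by blast
qed

lemma Hspace_lincomb:
  assumes "finite A" "\<And>n. n \<in> A \<Longrightarrow> e n \<in> Hspace k u v"
  shows "(\<lambda>z. \<Sum>n\<in>A. c n * e n z) \<in> Hspace k u v"
proof -
  have "hol_sec k (\<lambda>z. \<Sum>n\<in>A. c n * e n z)"
    using assms by (intro hol_sec_lincomb) (auto simp: Hspace_def)
  moreover have "Tstar k x (\<lambda>z. \<Sum>n\<in>A. c n * e n z) = (\<lambda>z. \<Sum>n\<in>A. c n * e n z)"
    if "x \<in> lattice u v" for x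
  proof -
    have "Tstar k x (\<lambda>z. \<Sum>n\<in>A. c n * e n z) = (\<lambda>z. \<Sum>n\<in>A. Tstar k x (\<lambda>z. c n * e n z) z)"
      by (rule Tstar_sum)
    also have "\<dots> = (\<lambda>z. \<Sum>n\<in>A. c n * e n z)"
      using assms(2) that by (simp add: Tstar_cmult Hspace_def)
    finally show ?thesis .
  qed
  ultimately show ?thesis by (simp add: Hspace_def)
qed

lemma periodic_int_mod:
  fixes f :: "int \<Rightarrow> 'a"
  assumes N: "N > 0" and p: "\<And>x. f (x + N) = f x"
  shows "f x = f (x mod N)"
proof -
  have pos: "f (y + int n * N) = f y" for y n
    by (induction n) (auto simp: algebra_simps p[of "y + int _ * N", simplified algebra_simps] p)
  have neg: "f (y - int n * N) = f y" for y n
    using pos[of "y - int n * N" n] by simp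
  have all: "f (y + q * N) = f y" for y q
  proof (cases "q \<ge> 0")
    case True then show ?thesis using pos[of y "nat q"] by simp
  next
    case False then show ?thesis using neg[of y "nat (-q)"] by simp
  qed
  have "x = x mod N + (x div N) * N" by simp
  then show ?thesis using all[of "x mod N" "x div N"] by metis
qed

lemma periodic_shift_sum:
  fixes f :: "int \<Rightarrow> 'a::comm_monoid_add"
  assumes N: "N > 0" and p: "\<And>x. f (x + N) = f x"
  shows "(\<Sum>l\<in>{0..<N}. f (l + a)) = (\<Sum>l\<in>{0..<N}. f l)"
proof (rule sum.reindex_bij_witness[where i = "\<lambda>l. (l - a) mod N" and j = "\<lambda>l. (l + a) mod N"])
  show "((l + a) mod N - a) mod N = l" if "l \<in> {0..<N}" for l
    using that by (simp add: mod_diff_left_eq)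
  show "(l + a) mod N \<in> {0..<N}" for l using N by simp
  show "((l - a) mod N + a) mod N = l" if "l \<in> {0..<N}" for l
    using that by (simp add: mod_add_left_eq)
  show "(l - a) mod N \<in> {0..<N}" for l using N by simp
  show "f ((l + a) mod N) = f (l + a)" for l
    using periodic_int_mod[where f=f, OF N p] by metis
qed

lemma avg_roots:
  fixes F :: "complex \<Rightarrow> complex" and e :: "int \<Rightarrow> complex \<Rightarrow> complex"
  assumes A: "finite A" and N: "N > 0"
    and F: "\<And>j. j < N \<Longrightarrow> F = (\<lambda>z. \<Sum>n\<in>A. c n * w n ^ j * e n z)"
    and w: "\<And>n. n \<in> A \<Longrightarrow> w n ^ N = 1"
  shows "F = (\<lambda>z. \<Sum>n\<in>A. (if w n = 1 then c n * e n z else 0))"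
proof
  fix z
  have gs: "(\<Sum>j<N. w n ^ j) = (if w n = 1 then of_nat N else 0)" if "n \<in> A" for n
    using w[OF that] by (simp add: sum_gp_strict)
  have "F z = (1 / of_nat N) * (\<Sum>j<N. F z)"
    using N by simp
  also have "(\<Sum>j<N. F z) = (\<Sum>j<N. \<Sum>n\<in>A. c n * w n ^ j * e n z)"
    using F by (intro sum.cong) auto
  also have "\<dots> = (\<Sum>n\<in>A. c n * e n z * (\<Sum>j<N. w n ^ j))"
    by (subst sum.swap) (simp add: sum_distrib_left mult_ac)
  also have "\<dots> = (\<Sum>n\<in>A. c n * e n z * (if w n = 1 then of_nat N else 0))"
    using gs by (intro sum.cong) auto
  finally show "F z = (\<Sum>n\<in>A. (if w n = 1 then c n * e n z else 0))"
    using N by (simp add: sum_distrib_left if_distrib cong: if_cong)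
qed

lemma exp_root_eq_1:
  assumes "0 < K"
  shows "exp (\<i> * of_real pi * of_int n / of_nat K) = 1 \<longleftrightarrow> int (2*K) dvd n"
proof -
  have "exp (\<i> * of_real pi * of_int n / of_nat K) = 1 \<longleftrightarrow> (\<exists>m::int. pi * of_int n / of_nat K = of_int (2 * m) * pi)"
    by (simp add: exp_eq_1)
  also have "\<dots> \<longleftrightarrow> (\<exists>m::int. n = 2 * int K * m)"
  proof
    assume "\<exists>m::int. pi * of_int n / of_nat K = of_int (2 * m) * pi"
    then obtain m :: int where "pi * of_int n / of_nat K = of_int (2 * m) * pi" by blast
    then have "real_of_int n = real_of_int (2 * int K * m)" using assms by (simp add: field_simps)
    then show "\<exists>m::int. n = 2 * int K * m" by (intro exI[of _ m]) linarith
  next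
    assume "\<exists>m::int. n = 2 * int K * m"
    then obtain m where "n = 2 * int K * m" by blast
    then show "\<exists>m::int. pi * of_int n / of_nat K = of_int (2 * m) * pi"
      using assms by (intro exI[of _ m]) (simp add: field_simps)
  qed
  also have "\<dots> \<longleftrightarrow> int (2*K) dvd n" by (auto simp: dvd_def mult_ac)
  finally show ?thesis .
qed

lemma exp_root_pow:
  "exp (\<i> * of_real pi * of_int n / of_nat (k * D)) ^ (j * D) = exp (\<i> * of_real pi * of_int n / of_nat k) ^ j"
  if "D > 0" for D :: nat
proof -
  have "exp (\<i> * of_real pi * of_int n / of_nat (k * D)) ^ (j * D)
      = exp (of_nat (j * D) * (\<i> * of_real pi * of_int n / of_nat (k * D)))"
    by (rule exp_of_nat_mult[symmetric])
  also have "of_nat (j * D) * (\<i> * of_real pi * of_int n / of_nat (k * D)) = of_nat j * (\<i> * of_real pi * of_int n / of_nat k)"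
    using that by (simp add: field_simps)
  also have "exp \<dots> = exp (\<i> * of_real pi * of_int n / of_nat k) ^ j"
    by (rule exp_of_nat_mult)
  finally show ?thesis .
qed

lemma exp_root_full:
  assumes "0 < K"
  shows "exp (\<i> * of_real pi * of_int n / of_nat K) ^ (2 * K) = 1"
proof -
  have "exp (\<i> * of_real pi * of_int n / of_nat K) ^ (2 * K) = exp (of_nat (2*K) * (\<i> * of_real pi * of_int n / of_nat K))"
    by (rule exp_of_nat_mult[symmetric])
  also have "of_nat (2*K) * (\<i> * of_real pi * of_int n / of_nat K) = \<i> * of_real pi * of_int (2 * n * int K) / of_nat K"
    using assms by (simp add: field_simps)
  also have "exp \<dots> = 1"
    using assms by (subst exp_root_eq_1) auto
  finally show ?thesis .
qed

lemma lattice_mem: "of_int m * u + of_int n * v \<in> lattice u v"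
  by (auto simp: lattice_def)

lemma Hspace_sub:
  assumes "f \<in> Hspace k lam mu"
  shows "f \<in> Hspace k (of_nat D * mu) lam"
proof -
  have "lattice (of_nat D * mu) lam \<subseteq> lattice lam mu"
  proof
    fix x assume "x \<in> lattice (of_nat D * mu) lam"
    then obtain m n where "x = of_int m * (of_nat D * mu) + of_int n * lam" by (auto simp: lattice_def)
    then have "x = of_int n * lam + of_int (m * int D) * mu" by (simp add: algebra_simps)
    then show "x \<in> lattice lam mu" using lattice_mem by metis
  qed
  then show ?thesis using assms by (auto simp: Hspace_def)
qed

lemma omega_int_mult: "omega (of_int m * x) (of_int j * x) = 0"
  by (simp add: omega_def algebra_simps)

lemma Phi_rel:
  fixes Psi :: "int \<Rightarrow> complex \<Rightarrow> complex"
  assumes k: "0 < k" and D: "0 < D"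
    and basis: "omega mu lam = 4 * pi"
    and Psi_S: "\<And>n. Tstar k (- lam / of_nat (2 * k * D)) (Psi n)
                 = (\<lambda>z. exp (\<i> * of_real pi * of_int n / of_nat (k * D)) * Psi n z)"
    and Psi_R: "\<And>n. Tstar k ((of_nat D * mu - 2 * lam) / of_nat (2 * k * D)) (Psi n) = Psi (n + 1)"
  shows "Tstar k (of_nat m * mu) (Psi 0) = (\<lambda>z. exp (- (4 * of_real pi * \<i> * of_nat k * of_nat m ^ 2 / of_nat D)) * Psi (2 * int k * int m) z)"
proof -
  have R: "Tstar k (of_nat (2*k*m) * ((of_nat D * mu - 2 * lam) / of_nat (2 * k * D))) (Psi 0) = Psi (2 * int k * int m)"
    using Tstar_pow_shift[of k "(of_nat D * mu - 2 * lam) / of_nat (2 * k * D)" Psi "2*k*m" 0] Psi_R by simp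
  have S: "Tstar k (of_nat (4*k*m) * (- lam / of_nat (2 * k * D))) (Psi 0) = Psi 0"
    using Tstar_pow_eig[of k "- lam / of_nat (2 * k * D)" "Psi 0" 1 "4*k*m"] Psi_S[of 0] by simp
  have e1: "of_nat (2*k*m) * ((of_nat D * mu - 2 * lam) / of_nat (2 * k * D)) = of_nat m * mu + of_nat (4*k*m) * (- lam / of_nat (2 * k * D))"
    using k D by (simp add: field_simps)
  have om: "omega (of_nat (4*k*m) * (- lam / of_nat (2 * k * D))) (of_nat m * mu) = 8 * pi * real m ^ 2 / real D"
  proof -
    have eq1: "of_nat (4*k*m) * (- lam / of_nat (2 * k * D)) = of_real (- 2 * real m / real D) * lam"
      using k D by (simp add: field_simps)
    have eq2: "of_nat m * mu = of_real (real m) * mu" by simp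
    have ol: "omega lam mu = - 4 * pi" using basis omega_swap[of lam mu] by simp
    have "omega (of_nat (4*k*m) * (- lam / of_nat (2 * k * D))) (of_nat m * mu)
        = omega (of_real (- 2 * real m / real D) * lam) (of_real (real m) * mu)"
      by (simp only: eq1 eq2)
    also have "\<dots> = (- 2 * real m / real D) * (real m * omega lam mu)"
      by (simp only: omega_scale_left omega_scale_right) (simp only: mult_ac)
    also have "\<dots> = 8 * pi * real m ^ 2 / real D"
      using D by (simp add: ol power2_eq_square field_simps)
    finally show ?thesis .
  qed
  have "Tstar k (of_nat m * mu) (Psi 0) = Tstar k (of_nat m * mu) (Tstar k (of_nat (4*k*m) * (- lam / of_nat (2 * k * D))) (Psi 0))"
    by (simp only: S)
  also have "\<dots> = (\<lambda>z. exp (- \<i> * complex_of_real (real k / 2 * (8 * pi * real m ^ 2 / real D))) * Psi (2 * int k * int m) z)"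
    by (simp only: Tstar_comp om e1[symmetric] R)
  also have "\<dots> = (\<lambda>z. exp (- (4 * of_real pi * \<i> * of_nat k * of_nat m ^ 2 / of_nat D)) * Psi (2 * int k * int m) z)"
    by (simp add: field_simps)
  finally show ?thesis .
qed

lemma filter_dvd_reindex:
  fixes F :: "int \<Rightarrow> complex"
  assumes k: "0 < k"
  shows "(\<Sum>n\<in>{0..<int (2*k*D)}. if int (2*k) dvd n then F n else 0) = (\<Sum>m\<in>{0..<int D}. F (2 * int k * m))"
proof -
  have "(\<Sum>n\<in>{0..<int (2*k*D)}. if int (2*k) dvd n then F n else 0) = (\<Sum>n\<in>{n\<in>{0..<int (2*k*D)}. int (2*k) dvd n}. F n)"
    by (metis (no_types) finite_atLeastLessThan_int sum.inter_filter)
  also have "{n\<in>{0..<int (2*k*D)}. int (2*k) dvd n} = (\<lambda>m. 2 * int k * m) ` {0..<int D}"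
  proof (rule set_eqI, rule iffI)
    fix n assume H: "n \<in> {n\<in>{0..<int (2*k*D)}. int (2*k) dvd n}"
    then have n0: "0 \<le> n" and n1: "n < int (2 * k) * int D" and dv: "int (2*k) dvd n" by auto
    from dv obtain q where q0: "n = int (2*k) * q" by (rule dvdE)
    have kp: "0 < int (2*k)" using k by simp
    have "0 \<le> int (2*k) * q" using q0 n0 by simp
    then have "0 \<le> q" using kp by (simp add: zero_le_mult_iff)
    moreover have "int (2*k) * q < int (2*k) * int D" using q0 n1 by simp
    then have "q < int D" using kp by (simp only: mult_less_cancel_left_pos)
    moreover have q: "n = 2 * int k * q" using q0 by simp
    ultimately have "q \<in> {0..<int D}" by simp
    then show "n \<in> (\<lambda>m. 2 * int k * m) ` {0..<int D}" using q by (rule rev_image_eqI)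
  next
    fix n assume "n \<in> (\<lambda>m. 2 * int k * m) ` {0..<int D}"
    then obtain q where qA: "q \<in> {0..<int D}" and q: "n = 2 * int k * q" by (rule imageE)
    have kp: "0 < 2 * int k" using k by simp
    have "0 \<le> n" using qA kp q by simp
    moreover have "2 * int k * q < 2 * int k * int D" using qA kp by (simp only: mult_less_cancel_left_pos atLeastLessThan_iff)
    then have "n < int (2*k*D)" using q by simp
    moreover have "int (2*k) dvd n" using q by simp
    ultimately show "n \<in> {n\<in>{0..<int (2*k*D)}. int (2*k) dvd n}" by simp
  qed
  also have "(\<Sum>n\<in>(\<lambda>m. 2 * int k * m) ` {0..<int D}. F n) = (\<Sum>m\<in>{0..<int D}. F (2 * int k * m))"
    using k by (subst sum.reindex) (auto simp: inj_on_def)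
  finally show ?thesis .
qed

lemma part1:
  fixes xi Psi :: "int \<Rightarrow> complex \<Rightarrow> complex" and Z :: "complex \<Rightarrow> complex" and k D :: nat
  assumes k: "0 < k" and D: "0 < D"
    and basis: "omega mu lam = 4 * pi"
    and xi_onb: "is_onb (Hspace k lam mu) lam mu (2 * k) xi"
    and xi_L: "\<And>l. Tstar k (- lam / of_nat (2 * k)) (xi l) = xi (l - 1)"
    and Z: "Z = (\<lambda>z. C * (\<Sum>l\<in>{0..<int (2 * k)}. xi l z))"
    and Psi_onb: "is_onb (Hspace k (of_nat D * mu) lam) (of_nat D * mu) lam (2 * k * D) Psi"
    and Psi_S: "\<And>n. Tstar k (- lam / of_nat (2 * k * D)) (Psi n)
                 = (\<lambda>z. exp (\<i> * of_real pi * of_int n / of_nat (k * D)) * Psi n z)"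
    and Psi_R: "\<And>n. Tstar k ((of_nat D * mu - 2 * lam) / of_nat (2 * k * D)) (Psi n) = Psi (n + 1)"
  shows "\<exists>B. Z = (\<lambda>z. B * (\<Sum>j\<in>{0..<int D}. Tstar k (of_int j * mu) (Psi 0) z))"
proof -
  define Phi where "Phi j = Tstar k (of_int j * mu) (Psi 0)" for j
  have xiH: "xi l \<in> Hspace k lam mu" for l using xi_onb by (simp add: is_onb_def)
  have xiper: "xi (l + int (2*k)) = xi l" for l using xi_onb by (simp add: is_onb_def)
  have Z': "Z = (\<lambda>z. \<Sum>l\<in>{0..<int (2 * k)}. C * xi l z)"
    by (simp add: Z sum_distrib_left)
  have ZH: "Z \<in> Hspace k lam mu"
    unfolding Z' by (rule Hspace_lincomb) (auto simp: xiH)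
  have ZH2: "Z \<in> Hspace k (of_nat D * mu) lam" using ZH by (rule Hspace_sub)
  obtain c where c: "Z = (\<lambda>z. \<Sum>n\<in>{0..<int (2*k*D)}. c n * Psi n z)"
    using Psi_onb ZH2 unfolding is_onb_def by blast
  define V where "V = - lam / of_nat (2 * k)"
  have LZ: "Tstar k V Z = (\<lambda>z. 1 * Z z)"
  proof -
    have "Tstar k V Z = (\<lambda>z. C * (\<Sum>l\<in>{0..<int (2 * k)}. Tstar k V (xi l) z))"
      by (simp only: Z Tstar_cmult Tstar_sum)
    also have "\<dots> = (\<lambda>z. C * (\<Sum>l\<in>{0..<int (2 * k)}. xi (l + -1) z))"
      by (simp only: V_def xi_L diff_conv_add_uminus)
    also have "\<dots> = Z"
    proof
      fix z
      have "(\<Sum>l\<in>{0..<int (2 * k)}. (\<lambda>l. xi l z) (l + -1)) = (\<Sum>l\<in>{0..<int (2 * k)}. (\<lambda>l. xi l z) l)"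
        by (rule periodic_shift_sum) (use k xiper in auto)
      then show "C * (\<Sum>l\<in>{0..<int (2 * k)}. xi (l + -1) z) = Z z" by (simp add: Z)
    qed
    finally show ?thesis by simp
  qed
  define w where "w n = exp (\<i> * of_real pi * of_int n / of_nat k)" for n
  have LjPsi: "Tstar k (of_nat j * V) (Psi n) = (\<lambda>z. w n ^ j * Psi n z)" for j n
  proof -
    have "of_nat j * V = of_nat (j * D) * (- lam / of_nat (2 * k * D))"
      using D k by (simp add: V_def field_simps)
    then have "Tstar k (of_nat j * V) (Psi n) = (\<lambda>z. exp (\<i> * of_real pi * of_int n / of_nat (k * D)) ^ (j * D) * Psi n z)"
      using Tstar_pow_eig[OF Psi_S[of n], of "j * D"] by simp
    then show ?thesis using exp_root_pow[OF D, of n k j] by (simp add: w_def)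
  qed
  have expand: "Z = (\<lambda>z. \<Sum>n\<in>{0..<int (2*k*D)}. c n * w n ^ j * Psi n z)" if "j < 2 * k" for j
  proof -
    have "Z = Tstar k (of_nat j * V) Z"
      using Tstar_pow_eig[OF LZ, of j] by simp
    also have "\<dots> = Tstar k (of_nat j * V) (\<lambda>z. \<Sum>n\<in>{0..<int (2*k*D)}. c n * Psi n z)"
      using c by simp
    also have "\<dots> = (\<lambda>z. \<Sum>n\<in>{0..<int (2*k*D)}. c n * w n ^ j * Psi n z)"
      by (simp only: Tstar_sum Tstar_cmult LjPsi) (simp add: mult_ac)
    finally show ?thesis .
  qed
  have Zf: "Z = (\<lambda>z. \<Sum>n\<in>{0..<int (2*k*D)}. (if w n = 1 then c n * Psi n z else 0))"
    by (rule avg_roots[where N = "2*k"]) (use k expand exp_root_full[of k] in \<open>auto simp: w_def\<close>)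
  have Zf2: "Z = (\<lambda>z. \<Sum>m\<in>{0..<int D}. c (2 * int k * m) * Psi (2 * int k * m) z)"
  proof
    fix z
    have "Z z = (\<Sum>n\<in>{0..<int (2*k*D)}. (if int (2*k) dvd n then c n * Psi n z else 0))"
      using Zf exp_root_eq_1[OF k] by (simp add: w_def)
    also have "\<dots> = (\<Sum>m\<in>{0..<int D}. c (2 * int k * m) * Psi (2 * int k * m) z)"
      by (rule filter_dvd_reindex[OF k])
    finally show "Z z = \<dots>" .
  qed
  define E where "E m = exp (4 * of_real pi * \<i> * of_nat k * of_int m ^ 2 / of_nat D)" for m :: int
  have PsiPhi: "Psi (2 * int k * m) z = E m * Phi m z" if "m \<in> {0..<int D}" for m z
  proof -
    define m' where "m' = nat m"
    have m': "m = int m'" using that by (simp add: m'_def)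
    have "Phi m z = exp (- (4 * of_real pi * \<i> * of_nat k * of_nat m' ^ 2 / of_nat D)) * Psi (2 * int k * int m') z"
      using Phi_rel[OF k D basis Psi_S Psi_R, of m'] by (simp add: Phi_def m')
    then have "E m * Phi m z = (E m * exp (- (4 * of_real pi * \<i> * of_nat k * of_nat m' ^ 2 / of_nat D))) * Psi (2 * int k * m) z"
      by (simp add: m')
    also have "E m * exp (- (4 * of_real pi * \<i> * of_nat k * of_nat m' ^ 2 / of_nat D)) = 1"
      by (simp add: E_def m' exp_minus field_simps)
    finally show ?thesis by simp
  qed
  define beta where "beta m = c (2 * int k * m) * E m" for m
  have Zf3: "Z = (\<lambda>z. \<Sum>m\<in>{0..<int D}. beta m * Phi m z)"
  proof
    fix z
    show "Z z = (\<Sum>m\<in>{0..<int D}. beta m * Phi m z)"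
      unfolding Zf2 by (rule sum.cong) (auto simp: PsiPhi beta_def)
  qed
  have Phi_shift: "Tstar k (of_int j * mu) (Phi m) = Phi (m + j)" for j m
  proof -
    have "Tstar k (of_int j * mu) (Phi m) = Tstar k (of_int j * mu + of_int m * mu) (Psi 0)"
      unfolding Phi_def by (rule Tstar_comp0) (rule omega_int_mult)
    then show ?thesis by (simp add: Phi_def algebra_simps)
  qed
  have Psi0H: "Psi 0 \<in> Hspace k (of_nat D * mu) lam" using Psi_onb by (simp add: is_onb_def)
  have Psi0D: "Tstar k (of_nat D * mu) (Psi 0) = Psi 0"
  proof -
    have "of_nat D * mu = of_int 1 * (of_nat D * mu) + of_int 0 * lam" by simp
    then have "of_nat D * mu \<in> lattice (of_nat D * mu) lam" by (metis lattice_mem)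
    then show ?thesis using Psi0H by (simp add: Hspace_def)
  qed
  have Phi_per: "Phi (m + int D) = Phi m" for m
  proof -
    have "Phi (m + int D) = Tstar k (of_int m * mu + of_int (int D) * mu) (Psi 0)"
      by (simp add: Phi_def algebra_simps)
    also have "\<dots> = Tstar k (of_int m * mu) (Tstar k (of_int (int D) * mu) (Psi 0))"
      by (rule Tstar_comp0[symmetric]) (rule omega_int_mult)
    also have "\<dots> = Phi m" using Psi0D by (simp add: Phi_def)
    finally show ?thesis .
  qed
  have Zinv: "Tstar k (of_int j * mu) Z = Z" for j
  proof -
    have "of_int j * mu = of_int 0 * lam + of_int j * mu" by simp
    then have "of_int j * mu \<in> lattice lam mu" by (metis lattice_mem)
    then show ?thesis using ZH by (simp add: Hspace_def)
  qed
  show ?thesis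
  proof (intro exI[of _ "(\<Sum>m\<in>{0..<int D}. beta m) / of_nat D"] ext)
    fix z
    have "Z z = (1 / of_nat D) * (\<Sum>j\<in>{0..<int D}. Tstar k (of_int j * mu) Z z)"
      using D by (simp add: Zinv)
    also have "(\<Sum>j\<in>{0..<int D}. Tstar k (of_int j * mu) Z z) = (\<Sum>j\<in>{0..<int D}. \<Sum>m\<in>{0..<int D}. beta m * Phi (m + j) z)"
    proof (rule sum.cong[OF refl])
      fix j
      have "Tstar k (of_int j * mu) Z = Tstar k (of_int j * mu) (\<lambda>z. \<Sum>m\<in>{0..<int D}. beta m * Phi m z)"
        using Zf3 by simp
      also have "\<dots> = (\<lambda>z. \<Sum>m\<in>{0..<int D}. beta m * Phi (m + j) z)"
        by (simp add: Tstar_sum Tstar_cmult Phi_shift)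
      finally show "Tstar k (of_int j * mu) Z z = (\<Sum>m\<in>{0..<int D}. beta m * Phi (m + j) z)" by simp
    qed
    also have "\<dots> = (\<Sum>m\<in>{0..<int D}. beta m * (\<Sum>j\<in>{0..<int D}. (\<lambda>j. Phi j z) (j + m)))"
      by (subst sum.swap) (simp add: sum_distrib_left add.commute)
    also have "\<dots> = (\<Sum>m\<in>{0..<int D}. beta m * (\<Sum>j\<in>{0..<int D}. Phi j z))"
    proof (rule sum.cong[OF refl])
      fix m
      have "(\<Sum>j\<in>{0..<int D}. (\<lambda>j. Phi j z) (j + m)) = (\<Sum>j\<in>{0..<int D}. (\<lambda>j. Phi j z) j)"
        by (rule periodic_shift_sum) (use D Phi_per in auto)
      then show "beta m * (\<Sum>j\<in>{0..<int D}. (\<lambda>j. Phi j z) (j + m)) = beta m * (\<Sum>j\<in>{0..<int D}. Phi j z)" by simp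
    qed
    finally show "Z z = (\<Sum>m\<in>{0..<int D}. beta m) / of_nat D * (\<Sum>j\<in>{0..<int D}. Tstar k (of_int j * mu) (Psi 0) z)"
      by (simp add: sum_distrib_right Phi_def)
  qed
qed

lemma cmod_sq_complex: "complex_of_real ((cmod z)^2) = z * cnj z"
  by (rule complex_norm_square)

lemma Tstar_hol:
  "Tstar k x (\<lambda>y. exp (complex_of_real (- real k * (cmod y)^2 / 4)) * g y)
   = (\<lambda>y. exp (complex_of_real (- real k * (cmod y)^2 / 4)) *
          (exp (- of_nat k * x * cnj x / 4 - of_nat k * cnj x * y / 2) * g (x + y)))"
proof
  fix y
  have e: "- \<i> * complex_of_real (real k / 2 * omega x y) + complex_of_real (- real k * (cmod (x + y))^2 / 4)
      = complex_of_real (- real k * (cmod y)^2 / 4) + (- of_nat k * x * cnj x / 4 - of_nat k * cnj x * y / 2)"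
  proof -
    have a0: "complex_of_real (- real k * (cmod (x + y))^2 / 4) = - of_nat k * complex_of_real ((cmod (x+y))^2) / 4"
      by simp
    have a: "complex_of_real (- real k * (cmod (x + y))^2 / 4) = - of_nat k * ((x+y) * cnj (x+y)) / 4"
      unfolding a0 cmod_sq_complex ..
    have b0: "complex_of_real (- real k * (cmod y)^2 / 4) = - of_nat k * complex_of_real ((cmod y)^2) / 4"
      by simp
    have b: "complex_of_real (- real k * (cmod y)^2 / 4) = - of_nat k * (y * cnj y) / 4"
      unfolding b0 cmod_sq_complex ..
    have c: "- \<i> * complex_of_real (real k / 2 * omega x y) = - of_nat k * (cnj x * y - x * cnj y) / 4"
      by (simp add: omega_def complex_eq_iff algebra_simps)
    show ?thesis unfolding a b c
      by (simp add: field_simps)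
  qed
  show "Tstar k x (\<lambda>y. exp (complex_of_real (- real k * (cmod y)^2 / 4)) * g y) y =
     exp (complex_of_real (- real k * (cmod y)^2 / 4)) *
          (exp (- of_nat k * x * cnj x / 4 - of_nat k * cnj x * y / 2) * g (x + y))"
    unfolding Tstar_def by (rule exp_mult_shuffle[OF e])
qed

definition Pf :: "nat \<Rightarrow> complex \<Rightarrow> complex \<Rightarrow> complex" where
  "Pf k lam z = exp (complex_of_real (- real k * (cmod z)^2 / 4)) * exp (of_nat k * cnj lam / (4 * lam) * z^2)"

definition termf :: "nat \<Rightarrow> complex \<Rightarrow> complex \<Rightarrow> int \<Rightarrow> complex \<Rightarrow> complex" where
  "termf k lam nu n = Tstar k (of_int n * nu) (Pf k lam)"

lemma Pf_lam_inv:
  assumes lam: "lam \<noteq> 0"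
  shows "Tstar k (of_real t * lam) (Pf k lam) = Pf k lam"
proof -
  have "Tstar k (of_real t * lam) (Pf k lam) = (\<lambda>y. exp (complex_of_real (- real k * (cmod y)^2 / 4)) *
          (exp (- of_nat k * (of_real t * lam) * cnj (of_real t * lam) / 4 - of_nat k * cnj (of_real t * lam) * y / 2) *
           exp (of_nat k * cnj lam / (4 * lam) * (of_real t * lam + y)^2)))"
    unfolding Pf_def[abs_def] by (rule Tstar_hol)
  also have "\<dots> = Pf k lam"
  proof
    fix y
    have "(- of_nat k * (of_real t * lam) * cnj (of_real t * lam) / 4 - of_nat k * cnj (of_real t * lam) * y / 2) +
           (of_nat k * cnj lam / (4 * lam) * (of_real t * lam + y)^2) = of_nat k * cnj lam / (4 * lam) * y^2"
      using lam by (simp add: field_simps power2_eq_square)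
    then have "exp (- of_nat k * (of_real t * lam) * cnj (of_real t * lam) / 4 - of_nat k * cnj (of_real t * lam) * y / 2) *
           exp (of_nat k * cnj lam / (4 * lam) * (of_real t * lam + y)^2) = exp (of_nat k * cnj lam / (4 * lam) * y^2)"
      by (metis exp_add)
    then show "exp (complex_of_real (- real k * (cmod y)^2 / 4)) *
          (exp (- of_nat k * (of_real t * lam) * cnj (of_real t * lam) / 4 - of_nat k * cnj (of_real t * lam) * y / 2) *
           exp (of_nat k * cnj lam / (4 * lam) * (of_real t * lam + y)^2)) = Pf k lam y"
      by (simp add: Pf_def)
  qed
  finally show ?thesis .
qed

lemma norm_Pf:
  assumes lam: "lam \<noteq> 0"
  shows "cmod (Pf k lam z) = exp (- (real k / 2) * (omega lam z)^2 / (cmod lam)^2)"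
proof -
  define u where "u = cnj lam * z"
  have l2: "(cmod lam)^2 > 0" using lam by simp
  have cl: "complex_of_real (cmod lam) * complex_of_real (cmod lam) = lam * cnj lam"
    by (metis complex_norm_square of_real_mult power2_eq_square)
  have h1: "cnj lam / (4 * lam) * z^2 = u^2 / complex_of_real (4 * (cmod lam)^2)"
    using lam by (simp add: u_def field_simps power2_eq_square cl)
  have h2: "Re (u^2 / complex_of_real (4 * (cmod lam)^2)) = ((Re u)^2 - (Im u)^2) / (4 * (cmod lam)^2)"
    by (simp add: Re_divide_of_real power2_eq_square)
  have h3: "(cmod z)^2 = ((Re u)^2 + (Im u)^2) / (cmod lam)^2"
  proof -
    have e1: "(cmod u)^2 = (cmod lam)^2 * (cmod z)^2" by (simp add: u_def norm_mult power_mult_distrib)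
    have e2: "(cmod u)^2 = (Re u)^2 + (Im u)^2" by (simp only: cmod_power2)
    have "(cmod z)^2 = (cmod u)^2 / (cmod lam)^2" using e1 l2 by (simp add: field_simps)
    then show ?thesis by (simp only: e2)
  qed
  have om: "omega lam z = Im u" by (simp add: omega_def u_def)
  have "cmod (Pf k lam z) = exp (- real k * (cmod z)^2 / 4) * exp (Re (of_nat k * cnj lam / (4 * lam) * z^2))"
    by (simp add: Pf_def norm_mult norm_exp)
  also have "Re (of_nat k * cnj lam / (4 * lam) * z^2) = real k * (((Re u)^2 - (Im u)^2) / (4 * (cmod lam)^2))"
  proof -
    have "of_nat k * cnj lam / (4 * lam) * z^2 = of_real (real k) * (cnj lam / (4 * lam) * z^2)" by simp
    moreover have "Re (of_real (real k) * w) = real k * Re w" for w by simp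
    ultimately show ?thesis by (simp only: h1 h2)
  qed
  also have "exp (- real k * (cmod z)^2 / 4) * exp (real k * (((Re u)^2 - (Im u)^2) / (4 * (cmod lam)^2)))
      = exp (- (real k / 2) * (omega lam z)^2 / (cmod lam)^2)"
  proof -
    have "- real k * (cmod z)^2 / 4 + real k * (((Re u)^2 - (Im u)^2) / (4 * (cmod lam)^2)) = - (real k / 2) * (omega lam z)^2 / (cmod lam)^2"
      unfolding h3 om using l2 by (simp add: field_simps)
    then show ?thesis by (metis exp_add)
  qed
  finally show ?thesis .
qed

lemma norm_termf:
  assumes lam: "lam \<noteq> 0"
  shows "cmod (termf k lam nu n z) = exp (- (real k / 2) * (of_int n * omega lam nu + omega lam z)^2 / (cmod lam)^2)"
proof -
  have "omega lam (of_int n * nu + z) = of_int n * omega lam nu + omega lam z"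
    by (simp add: omega_def algebra_simps)
  then show ?thesis by (simp add: termf_def norm_Tstar norm_Pf[OF lam])
qed

lemma geom_nat_hs:
  fixes r :: real assumes "0 \<le> r" "r < 1"
  shows "((\<lambda>n::nat. r ^ n) has_sum (1 / (1 - r))) UNIV"
  using assms by (intro sums_nonneg_imp_has_sum geometric_sums) auto

lemma geom_pos:
  fixes r :: real assumes "0 \<le> r" "r < 1"
  shows "((\<lambda>n::int. r ^ nat \<bar>n\<bar>) has_sum (r / (1 - r))) {n. n > 0}"
proof -
  have bij: "bij_betw (\<lambda>m::nat. int m + 1) UNIV {n. n > 0}"
    by (rule bij_betwI[where g = "\<lambda>n. nat (n - 1)"]) auto
  have "((\<lambda>m::nat. r * r ^ m) has_sum (r * (1 / (1 - r)))) UNIV"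
    by (rule has_sum_cmult_right[OF geom_nat_hs[OF assms]])
  moreover have "r * r ^ m = r ^ nat \<bar>int m + 1\<bar>" for m :: nat
    by (simp add: nat_add_distrib)
  ultimately have "((\<lambda>m::nat. r ^ nat \<bar>int m + 1\<bar>) has_sum (r / (1 - r))) UNIV" by simp
  then show ?thesis using has_sum_reindex_bij_betw[OF bij, of "\<lambda>n. r ^ nat \<bar>n\<bar>"] by simp
qed

lemma geom_neg:
  fixes r :: real assumes "0 \<le> r" "r < 1"
  shows "((\<lambda>n::int. r ^ nat \<bar>n\<bar>) has_sum (r / (1 - r))) {n. n < 0}"
proof -
  have bij: "bij_betw (\<lambda>m::nat. - int m - 1) UNIV {n. n < 0}"
    by (rule bij_betwI[where g = "\<lambda>n. nat (- n - 1)"]) auto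
  have "((\<lambda>m::nat. r * r ^ m) has_sum (r * (1 / (1 - r)))) UNIV"
    by (rule has_sum_cmult_right[OF geom_nat_hs[OF assms]])
  moreover have "r * r ^ m = r ^ nat \<bar>- int m - 1\<bar>" for m :: nat
    by (simp add: nat_add_distrib)
  ultimately have "((\<lambda>m::nat. r ^ nat \<bar>- int m - 1\<bar>) has_sum (r / (1 - r))) UNIV" by simp
  then show ?thesis using has_sum_reindex_bij_betw[OF bij, of "\<lambda>n. r ^ nat \<bar>n\<bar>"] by simp
qed

lemma geom_nz:
  fixes r :: real assumes "0 \<le> r" "r < 1"
  shows "((\<lambda>n::int. r ^ nat \<bar>n\<bar>) has_sum (2 * r / (1 - r))) (UNIV - {0})"
proof -
  have "((\<lambda>n::int. r ^ nat \<bar>n\<bar>) has_sum (r / (1 - r) + r / (1 - r))) ({n. n > 0} \<union> {n. n < 0})"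
    by (rule has_sum_Un_disjoint[OF geom_pos[OF assms] geom_neg[OF assms]]) auto
  moreover have "{n::int. n > 0} \<union> {n. n < 0} = UNIV - {0}" by auto
  ultimately show ?thesis by simp
qed

lemma geom_all:
  fixes r :: real assumes "0 \<le> r" "r < 1"
  shows "((\<lambda>n::int. r ^ nat \<bar>n\<bar>) has_sum (1 + 2 * r / (1 - r))) UNIV"
proof -
  have "((\<lambda>n::int. r ^ nat \<bar>n\<bar>) has_sum (r ^ nat \<bar>0\<bar> + 2 * r / (1 - r))) (insert 0 (UNIV - {0}))"
    by (rule has_sum_insert[OF _ geom_nz[OF assms]]) auto
  then show ?thesis by (simp add: insert_Diff_if)
qed

lemma geom_all_max:
  fixes r :: real assumes "0 \<le> r" "r < 1"
  shows "((\<lambda>n::int. r ^ max 1 (nat \<bar>n\<bar>)) has_sum (r + 2 * r / (1 - r))) UNIV"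
proof -
  have "((\<lambda>n::int. r ^ max 1 (nat \<bar>n\<bar>)) has_sum (2 * r / (1 - r))) (UNIV - {0})"
  proof -
    have "((\<lambda>n::int. r ^ nat \<bar>n\<bar>) has_sum (2 * r / (1 - r))) (UNIV - {0})" by (rule geom_nz[OF assms])
    then show ?thesis by (rule has_sum_cong[THEN iffD1, rotated]) (auto simp: max_def)
  qed
  then have "((\<lambda>n::int. r ^ max 1 (nat \<bar>n\<bar>)) has_sum (r ^ max 1 (nat \<bar>0\<bar>) + 2 * r / (1 - r))) (insert 0 (UNIV - {0}))"
    by (rule has_sum_insert[rotated]) auto
  then show ?thesis by (simp add: insert_Diff_if)
qed

lemma sq_ge_abs_int: "real_of_int \<bar>n\<bar> \<le> (real_of_int n)^2" for n :: int
proof -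
  have "\<bar>n\<bar> \<le> n^2"
  proof (cases "n = 0")
    case False
    then have "\<bar>n\<bar> * 1 \<le> \<bar>n\<bar> * \<bar>n\<bar>" by (intro mult_left_mono) auto
    then show ?thesis by (simp add: power2_eq_square abs_mult_self_eq)
  qed simp
  then show ?thesis by (metis of_int_le_iff of_int_power)
qed

lemma termf_bound:
  fixes lam nu z :: complex and k :: nat and n :: int
  assumes lam: "lam \<noteq> 0" and k: "0 < k"
  defines "L \<equiv> (cmod lam)^2" and "A \<equiv> omega lam nu" and "w \<equiv> omega lam z"
  shows "cmod (termf k lam nu n z) \<le> exp (real k * w^2 / (2 * L)) * exp (- real k * A^2 / (4 * L)) ^ nat \<bar>n\<bar>"
proof -
  have L: "L > 0" using lam by (simp add: L_def)
  have q: "(of_int n * A + w)^2 \<ge> real_of_int \<bar>n\<bar> * A^2 / 2 - w^2"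
  proof -
    have "(of_int n * A + w)^2 \<ge> (of_int n * A)^2 / 2 - w^2"
      using sum_squares_ge_zero[of "of_int n * A / sqrt 2 + w * sqrt 2" 0]
      by (simp add: power2_eq_square algebra_simps)
    moreover have "(of_int n * A)^2 / 2 \<ge> real_of_int \<bar>n\<bar> * A^2 / 2"
      using sq_ge_abs_int[of n] by (simp add: power_mult_distrib mult_right_mono)
    ultimately show ?thesis by linarith
  qed
  have "cmod (termf k lam nu n z) = exp (- (real k / 2) * (of_int n * A + w)^2 / L)"
    by (simp add: norm_termf[OF lam] L_def A_def w_def)
  also have "\<dots> \<le> exp (real k * w^2 / (2 * L) + real_of_int \<bar>n\<bar> * (- real k * A^2 / (4 * L)))"
  proof (rule exp_le_cancel_iff[THEN iffD2] )
    have "real k * (real_of_int \<bar>n\<bar> * A^2 / 2 - w^2) \<le> real k * (of_int n * A + w)^2"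
      using q k by (intro mult_left_mono) auto
    then show "- (real k / 2) * (of_int n * A + w)^2 / L \<le> real k * w^2 / (2 * L) + real_of_int \<bar>n\<bar> * (- real k * A^2 / (4 * L))"
      using L by (simp add: field_simps)
  qed
  also have "\<dots> = exp (real k * w^2 / (2 * L)) * exp (- real k * A^2 / (4 * L)) ^ nat \<bar>n\<bar>"
  proof -
    have m: "real_of_int \<bar>n\<bar> = of_nat (nat \<bar>n\<bar>)" by simp
    show ?thesis by (simp only: m exp_add exp_of_nat_mult)
  qed
  finally show ?thesis .
qed

lemma termf_summable:
  assumes lam: "lam \<noteq> 0" and k: "0 < k" and A: "omega lam nu \<noteq> 0"
  shows "(\<lambda>n. termf k lam nu n z) summable_on UNIV"
proof -
  define L where "L = (cmod lam)^2"
  define C where "C = exp (real k * (omega lam z)^2 / (2 * L))"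
  define r where "r = exp (- real k * (omega lam nu)^2 / (4 * L))"
  have L: "L > 0" using lam by (simp add: L_def)
  have r0: "0 \<le> r" by (simp add: r_def)
  have r1: "r < 1" using L k A by (simp add: r_def)
  have "((\<lambda>n::int. C * r ^ nat \<bar>n\<bar>) has_sum (C * (1 + 2 * r / (1 - r)))) UNIV"
    by (rule has_sum_cmult_right[OF geom_all[OF r0 r1]])
  then have "(\<lambda>n::int. C * r ^ nat \<bar>n\<bar>) summable_on UNIV" by (rule has_sum_imp_summable)
  then have "(\<lambda>n. cmod (termf k lam nu n z)) summable_on UNIV"
    by (rule summable_on_comparison_test) (use termf_bound[OF lam k] in \<open>auto simp: C_def r_def L_def\<close>)
  then show ?thesis by (rule abs_summable_summable)
qed

definition Gf :: "nat \<Rightarrow> complex \<Rightarrow> complex \<Rightarrow> complex \<Rightarrow> complex" where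
  "Gf k lam nu z = (\<Sum>\<^sub>\<infinity>n. termf k lam nu n z)"

lemma Tstar_infsum:
  "Tstar k x (\<lambda>z. \<Sum>\<^sub>\<infinity>n. f n z) = (\<lambda>z. \<Sum>\<^sub>\<infinity>n. Tstar k x (f n) z)"
  by (simp add: Tstar_def infsum_cmult_right')

lemma termf_nu_shift: "Tstar k (of_int a * nu) (termf k lam nu n) = termf k lam nu (n + a)"
proof -
  have "Tstar k (of_int a * nu) (termf k lam nu n) = Tstar k (of_int a * nu + of_int n * nu) (Pf k lam)"
    unfolding termf_def by (rule Tstar_comp0) (rule omega_int_mult)
  then show ?thesis by (simp add: termf_def algebra_simps)
qed

lemma Gf_nu_inv: "Tstar k (of_int a * nu) (Gf k lam nu) = Gf k lam nu"
proof -
  have "Tstar k (of_int a * nu) (Gf k lam nu) = (\<lambda>z. \<Sum>\<^sub>\<infinity>n. termf k lam nu (n + a) z)"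
    unfolding Gf_def[abs_def] by (simp only: Tstar_infsum termf_nu_shift)
  also have "\<dots> = Gf k lam nu"
  proof
    fix z
    have "bij_betw (\<lambda>n::int. n + a) UNIV UNIV"
      by (rule bij_betwI[where g = "\<lambda>n. n - a"]) auto
    then show "(\<Sum>\<^sub>\<infinity>n. termf k lam nu (n + a) z) = Gf k lam nu z"
      unfolding Gf_def by (rule infsum_reindex_bij_betw[where f = "\<lambda>n. termf k lam nu n z"])
  qed
  finally show ?thesis .
qed

lemma omega_int_left: "omega (of_int n * x) y = of_int n * omega x y"
  by (simp add: omega_def algebra_simps)
lemma omega_int_right: "omega x (of_int n * y) = of_int n * omega x y"
  by (simp add: omega_def algebra_simps)

lemma termf_lam_inv:
  assumes lam: "lam \<noteq> 0" and k: "0 < k" and D: "0 < D"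
    and A: "omega lam nu = - 4 * pi * real D"
  shows "Tstar k (of_real (of_int j / real (2 * k * D)) * lam) (termf k lam nu n) = termf k lam nu n"
proof -
  define x where "x = of_real (of_int j / real (2 * k * D)) * lam"
  define y where "y = of_int n * nu"
  have oxy: "omega x y = - 2 * pi * of_int j * of_int n / real k"
  proof -
    have "omega x y = (of_int j / real (2 * k * D)) * (of_int n * omega lam nu)"
      unfolding x_def y_def by (simp only: omega_scale_left omega_int_right) (simp add: mult_ac)
    then show ?thesis using k D by (simp only: A) (simp add: field_simps)
  qed
  have e: "exp (- \<i> * complex_of_real (real k / 2 * omega y x)) = exp (- \<i> * complex_of_real (real k / 2 * omega x y))"
  proof -
    have "- \<i> * complex_of_real (real k / 2 * omega y x) = - \<i> * complex_of_real (real k / 2 * omega x y) + complex_of_real (real_of_int (2 * (- j * n)) * pi) * \<i>"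
      using k by (simp only: omega_swap[of y x] oxy) (simp add: field_simps)
    then show ?thesis unfolding exp_eq by blast
  qed
  have "Tstar k x (termf k lam nu n) = (\<lambda>z. exp (- \<i> * complex_of_real (real k / 2 * omega y x)) * Tstar k (x + y) (Pf k lam) z)"
    unfolding termf_def y_def[symmetric] by (rule Tstar_comp)
  also have "\<dots> = (\<lambda>z. exp (- \<i> * complex_of_real (real k / 2 * omega x y)) * Tstar k (y + x) (Pf k lam) z)"
    by (simp only: e add.commute)
  also have "\<dots> = Tstar k y (Tstar k x (Pf k lam))"
    by (rule Tstar_comp[symmetric])
  also have "\<dots> = termf k lam nu n"
    by (simp only: x_def Pf_lam_inv[OF lam]) (simp add: termf_def y_def)
  finally show ?thesis by (simp add: x_def)
qed

lemma Gf_lam_inv: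
  assumes lam: "lam \<noteq> 0" and k: "0 < k" and D: "0 < D"
    and A: "omega lam nu = - 4 * pi * real D"
  shows "Tstar k (of_real (of_int j / real (2 * k * D)) * lam) (Gf k lam nu) = Gf k lam nu"
  unfolding Gf_def[abs_def] by (simp only: Tstar_infsum termf_lam_inv[OF assms])

lemma Gf_lattice_inv:
  assumes lam: "lam \<noteq> 0" and k: "0 < k" and D: "0 < D"
    and A: "omega lam nu = - 4 * pi * real D"
    and x: "x \<in> lattice nu lam"
  shows "Tstar k x (Gf k lam nu) = Gf k lam nu"
proof -
  obtain m n where xmn: "x = of_int m * nu + of_int n * lam" using x by (auto simp: lattice_def)
  have nl: "of_int n * lam = of_real (of_int (2 * int k * int D * n) / real (2 * k * D)) * lam"
    using k D by (simp add: field_simps)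
  have inv_n: "Tstar k (of_int n * lam) (Gf k lam nu) = Gf k lam nu"
    unfolding nl by (rule Gf_lam_inv[OF assms(1-4)])
  have om: "omega (of_int n * lam) (of_int m * nu) = - 4 * pi * real D * of_int n * of_int m"
  proof -
    have "omega (of_int n * lam) (of_int m * nu) = of_int n * (of_int m * omega lam nu)"
      by (simp only: omega_int_left omega_int_right) (simp add: mult_ac)
    then show ?thesis by (simp only: A) (simp add: field_simps)
  qed
  have e: "exp (- \<i> * complex_of_real (real k / 2 * omega (of_int n * lam) (of_int m * nu))) = 1"
  proof -
    have "- \<i> * complex_of_real (real k / 2 * omega (of_int n * lam) (of_int m * nu)) = 0 + complex_of_real (real_of_int (2 * (int k * int D * n * m)) * pi) * \<i>"
      by (simp only: om) (simp add: field_simps)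
    then have "exp (- \<i> * complex_of_real (real k / 2 * omega (of_int n * lam) (of_int m * nu))) = exp 0"
      unfolding exp_eq by blast
    then show ?thesis by simp
  qed
  have "Tstar k (of_int m * nu) (Tstar k (of_int n * lam) (Gf k lam nu)) =
        (\<lambda>z. exp (- \<i> * complex_of_real (real k / 2 * omega (of_int n * lam) (of_int m * nu))) * Tstar k x (Gf k lam nu) z)"
    unfolding xmn by (rule Tstar_comp)
  then have "Tstar k (of_int m * nu) (Tstar k (of_int n * lam) (Gf k lam nu)) = Tstar k x (Gf k lam nu)"
    by (simp only: e mult_1_left)
  then have "Tstar k x (Gf k lam nu) = Tstar k (of_int m * nu) (Tstar k (of_int n * lam) (Gf k lam nu))"
    by simp
  also have "\<dots> = Gf k lam nu" by (simp add: inv_n Gf_nu_inv)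
  finally show ?thesis .
qed

lemma ps_norm_summable:
  fixes A y :: complex
  assumes A: "cmod A < 1"
  shows "summable (\<lambda>m. cmod (A ^ (m^2) * y ^ m))"
proof -
  have "(\<lambda>m. cmod A ^ m * cmod y) \<longlonglongrightarrow> 0 * cmod y"
    by (intro tendsto_mult tendsto_const LIMSEQ_power_zero) (use A in auto)
  then have "eventually (\<lambda>m. cmod A ^ m * cmod y < 1/2) sequentially"
    by (intro order_tendstoD(2)) auto
  then have ev: "eventually (\<lambda>m. norm (cmod (A ^ (m^2) * y ^ m)) \<le> (1/2) ^ m) sequentially"
  proof (rule eventually_mono)
    fix m assume h: "cmod A ^ m * cmod y < 1/2"
    have "norm (cmod (A ^ (m^2) * y ^ m)) = (cmod A ^ m * cmod y) ^ m"
      by (simp add: norm_mult norm_power power_mult_distrib power2_eq_square power_mult)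
    also have "\<dots> \<le> (1/2) ^ m"
      using h by (intro power_mono) auto
    finally show "norm (cmod (A ^ (m^2) * y ^ m)) \<le> (1/2) ^ m" .
  qed
  show ?thesis
    by (rule summable_comparison_test_ev[OF ev]) (simp add: summable_geometric)
qed

definition Fps :: "complex \<Rightarrow> complex \<Rightarrow> complex" where
  "Fps A y = (\<Sum>m. A ^ (m^2) * y ^ m)"

lemma Fps_holo:
  assumes A: "cmod A < 1"
  shows "Fps A holomorphic_on UNIV"
proof -
  have "\<And>y. summable (\<lambda>m. A ^ (m^2) * y ^ m)"
    using ps_norm_summable[OF A] by (rule summable_norm_cancel)
  then have "\<And>x. ((\<lambda>x. \<Sum>m. A ^ (m^2) * x ^ m) has_field_derivative (\<Sum>m. diffs (\<lambda>m. A ^ (m^2)) m * x ^ m)) (at x)"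
    by (rule termdiffs_strong_converges_everywhere)
  then show ?thesis
    unfolding holomorphic_on_def field_differentiable_def Fps_def[abs_def]
    using has_field_derivative_at_within by blast
qed

lemma Fps_has_sum:
  assumes A: "cmod A < 1"
  shows "((\<lambda>m::nat. A ^ (m^2) * y ^ m) has_sum Fps A y) UNIV"
proof -
  have s: "summable (\<lambda>m. A ^ (m^2) * y ^ m)"
    using ps_norm_summable[OF A] by (rule summable_norm_cancel)
  show ?thesis
    by (rule norm_summable_imp_has_sum[OF ps_norm_summable[OF A]]) (simp add: Fps_def summable_sums[OF s])
qed

lemma Fps_has_sum_Suc:
  assumes A: "cmod A < 1"
  shows "((\<lambda>m::nat. A ^ ((Suc m)^2) * y ^ (Suc m)) has_sum (Fps A y - 1)) UNIV"
proof -
  have s: "summable (\<lambda>m. A ^ (m^2) * y ^ m)"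
    using ps_norm_summable[OF A] by (rule summable_norm_cancel)
  have ns: "summable (\<lambda>m. cmod (A ^ ((Suc m)^2) * y ^ (Suc m)))"
    using ps_norm_summable[OF A, of y] by (subst summable_Suc_iff[where f = "\<lambda>m. cmod (A ^ (m^2) * y ^ m)"])
  have "(\<lambda>m. A ^ ((Suc m)^2) * y ^ (Suc m)) sums (Fps A y - 1)"
    using summable_sums[OF s] by (subst sums_Suc_iff) (simp add: Fps_def)
  then show ?thesis by (rule norm_summable_imp_has_sum[OF ns])
qed

definition hterm :: "nat \<Rightarrow> complex \<Rightarrow> complex \<Rightarrow> int \<Rightarrow> complex \<Rightarrow> complex" where
  "hterm k lam nu n z = exp (- of_nat k * (of_int n * nu) * cnj (of_int n * nu) / 4 - of_nat k * cnj (of_int n * nu) * z / 2) *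
      exp (of_nat k * cnj lam / (4 * lam) * (of_int n * nu + z)^2)"

lemma termf_hterm: "termf k lam nu n z = exp (complex_of_real (- real k * (cmod z)^2 / 4)) * hterm k lam nu n z"
  unfolding termf_def hterm_def Pf_def[abs_def] Tstar_hol by simp

lemma hterm_pos:
  fixes k :: nat and lam nu z :: complex and m :: nat
  defines "bb \<equiv> of_nat k * cnj lam / (4 * lam)"
  defines "aa \<equiv> bb * nu^2 - of_nat k * nu * cnj nu / 4"
  defines "cc \<equiv> 2 * bb * nu - of_nat k * cnj nu / 2"
  shows "hterm k lam nu (int m) z = exp (bb * z^2) * (exp aa ^ (m^2) * exp (cc * z) ^ m)"
proof -
  have "hterm k lam nu (int m) z = exp ((- of_nat k * (of_nat m * nu) * cnj (of_nat m * nu) / 4 - of_nat k * cnj (of_nat m * nu) * z / 2) +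
      bb * (of_nat m * nu + z)^2)"
    by (simp add: hterm_def exp_add bb_def)
  also have "(- of_nat k * (of_nat m * nu) * cnj (of_nat m * nu) / 4 - of_nat k * cnj (of_nat m * nu) * z / 2) +
      bb * (of_nat m * nu + z)^2 = bb * z^2 + (of_nat (m^2) * aa + of_nat m * (cc * z))"
    by (simp add: aa_def cc_def field_simps power2_eq_square)
  also have "exp \<dots> = exp (bb * z^2) * (exp aa ^ (m^2) * exp (cc * z) ^ m)"
    by (simp only: exp_add exp_of_nat_mult)
  finally show ?thesis .
qed

lemma hterm_neg:
  fixes k :: nat and lam nu z :: complex and m :: nat
  defines "bb \<equiv> of_nat k * cnj lam / (4 * lam)"
  defines "aa \<equiv> bb * nu^2 - of_nat k * nu * cnj nu / 4"
  defines "cc \<equiv> 2 * bb * nu - of_nat k * cnj nu / 2"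
  shows "hterm k lam nu (- int m - 1) z = exp (bb * z^2) * (exp aa ^ ((Suc m)^2) * exp (- cc * z) ^ (Suc m))"
proof -
  have e: "of_int (- int m - 1) = - (of_nat (Suc m) :: complex)" by simp
  have "hterm k lam nu (- int m - 1) z = exp ((- of_nat k * (- of_nat (Suc m) * nu) * cnj (- of_nat (Suc m) * nu) / 4 - of_nat k * cnj (- of_nat (Suc m) * nu) * z / 2) +
      bb * (- of_nat (Suc m) * nu + z)^2)"
    unfolding hterm_def e by (simp only: exp_add bb_def)
  also have "(- of_nat k * (- of_nat (Suc m) * nu) * cnj (- of_nat (Suc m) * nu) / 4 - of_nat k * cnj (- of_nat (Suc m) * nu) * z / 2) +
      bb * (- of_nat (Suc m) * nu + z)^2 = bb * z^2 + (of_nat ((Suc m)^2) * aa + of_nat (Suc m) * (- cc * z))"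
    by (simp add: aa_def cc_def field_simps power2_eq_square)
  also have "exp \<dots> = exp (bb * z^2) * (exp aa ^ ((Suc m)^2) * exp (- cc * z) ^ (Suc m))"
    by (simp only: exp_add exp_of_nat_mult)
  finally show ?thesis .
qed

lemma exp_aa_Pf:
  fixes k :: nat and lam nu z :: complex and m :: nat
  defines "bb \<equiv> of_nat k * cnj lam / (4 * lam)"
  defines "aa \<equiv> bb * nu^2 - of_nat k * nu * cnj nu / 4"
  shows "exp aa = Pf k lam nu"
proof -
  have "complex_of_real (- real k * (cmod nu)^2 / 4) = - of_nat k * complex_of_real ((cmod nu)^2) / 4" by simp
  also have "\<dots> = - of_nat k * nu * cnj nu / 4" by (simp only: cmod_sq_complex mult.assoc)
  finally have "complex_of_real (- real k * (cmod nu)^2 / 4) = - of_nat k * nu * cnj nu / 4" .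
  then have "Pf k lam nu = exp (- of_nat k * nu * cnj nu / 4) * exp (bb * nu^2)"
    by (simp only: Pf_def bb_def)
  moreover have "aa = (- of_nat k * nu * cnj nu / 4) + bb * nu^2" by (simp add: aa_def)
  ultimately show ?thesis by (simp only: exp_add)
qed

lemma hterm_has_sum:
  fixes k :: nat and lam nu z :: complex
  defines "bb \<equiv> of_nat k * cnj lam / (4 * lam)"
  defines "aa \<equiv> bb * nu^2 - of_nat k * nu * cnj nu / 4"
  defines "cc \<equiv> 2 * bb * nu - of_nat k * cnj nu / 2"
  assumes A: "cmod (exp aa) < 1"
  shows "((\<lambda>n. hterm k lam nu n z) has_sum
           (exp (bb * z^2) * Fps (exp aa) (exp (cc * z)) + exp (bb * z^2) * (Fps (exp aa) (exp (- cc * z)) - 1))) UNIV"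
proof -
  have p: "((\<lambda>m::nat. hterm k lam nu (int m) z) has_sum exp (bb * z^2) * Fps (exp aa) (exp (cc * z))) UNIV"
  proof -
    have "((\<lambda>m::nat. exp (bb * z^2) * (exp aa ^ (m^2) * exp (cc * z) ^ m)) has_sum exp (bb * z^2) * Fps (exp aa) (exp (cc * z))) UNIV"
      by (rule has_sum_cmult_right[OF Fps_has_sum[OF A]])
    then show ?thesis by (simp only: hterm_pos[of k lam nu, folded bb_def, folded aa_def cc_def])
  qed
  have n: "((\<lambda>m::nat. hterm k lam nu (- int m - 1) z) has_sum exp (bb * z^2) * (Fps (exp aa) (exp (- cc * z)) - 1)) UNIV"
  proof -
    have "((\<lambda>m::nat. exp (bb * z^2) * (exp aa ^ ((Suc m)^2) * exp (- cc * z) ^ (Suc m))) has_sum exp (bb * z^2) * (Fps (exp aa) (exp (- cc * z)) - 1)) UNIV"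
      by (rule has_sum_cmult_right[OF Fps_has_sum_Suc[OF A]])
    then show ?thesis by (simp only: hterm_neg[of k lam nu, folded bb_def, folded aa_def cc_def])
  qed
  have b1: "bij_betw (\<lambda>m::nat. int m) UNIV {n. n \<ge> 0}"
    by (rule bij_betwI[where g = nat]) auto
  have b2: "bij_betw (\<lambda>m::nat. - int m - 1) UNIV {n. n < 0}"
    by (rule bij_betwI[where g = "\<lambda>n. nat (- n - 1)"]) auto
  have p': "((\<lambda>n. hterm k lam nu n z) has_sum exp (bb * z^2) * Fps (exp aa) (exp (cc * z))) {n. n \<ge> 0}"
    using has_sum_reindex_bij_betw[OF b1, of "\<lambda>n. hterm k lam nu n z"] p by simp
  have n': "((\<lambda>n. hterm k lam nu n z) has_sum exp (bb * z^2) * (Fps (exp aa) (exp (- cc * z)) - 1)) {n. n < 0}"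
    using has_sum_reindex_bij_betw[OF b2, of "\<lambda>n. hterm k lam nu n z"] n by simp
  have "((\<lambda>n. hterm k lam nu n z) has_sum (exp (bb * z^2) * Fps (exp aa) (exp (cc * z)) + exp (bb * z^2) * (Fps (exp aa) (exp (- cc * z)) - 1))) ({n. n \<ge> 0} \<union> {n. n < 0})"
    by (rule has_sum_Un_disjoint[OF p' n']) auto
  moreover have "{n::int. n \<ge> 0} \<union> {n. n < 0} = UNIV" by auto
  ultimately show ?thesis by simp
qed

lemma Gf_hol:
  assumes lam: "lam \<noteq> 0" and k: "0 < k" and A: "omega lam nu \<noteq> 0"
  shows "hol_sec k (Gf k lam nu)"
proof -
  define bb where "bb = of_nat k * cnj lam / (4 * lam)"
  define aa where "aa = bb * nu^2 - of_nat k * nu * cnj nu / 4"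
  define cc where "cc = 2 * bb * nu - of_nat k * cnj nu / 2"
  have Aa: "cmod (exp aa) < 1"
  proof -
    have "exp aa = Pf k lam nu" unfolding aa_def bb_def by (rule exp_aa_Pf)
    then have "cmod (exp aa) = exp (- (real k / 2) * (omega lam nu)^2 / (cmod lam)^2)"
      by (simp add: norm_Pf[OF lam])
    moreover have "- (real k / 2) * (omega lam nu)^2 / (cmod lam)^2 < 0"
      using lam k A by (simp add: divide_neg_pos)
    ultimately show ?thesis by simp
  qed
  define g where "g z = exp (bb * z^2) * Fps (exp aa) (exp (cc * z)) + exp (bb * z^2) * (Fps (exp aa) (exp (- cc * z)) - 1)" for z
  have hs: "((\<lambda>n. hterm k lam nu n z) has_sum g z) UNIV" for z
    unfolding g_def bb_def aa_def cc_def
    by (rule hterm_has_sum) (use Aa in \<open>simp add: aa_def bb_def\<close>)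
  have Geq: "Gf k lam nu z = exp (complex_of_real (- real k * (cmod z)^2 / 4)) * g z" for z
  proof -
    have "Gf k lam nu z = (\<Sum>\<^sub>\<infinity>n. exp (complex_of_real (- real k * (cmod z)^2 / 4)) * hterm k lam nu n z)"
      by (simp add: Gf_def termf_hterm)
    also have "\<dots> = exp (complex_of_real (- real k * (cmod z)^2 / 4)) * (\<Sum>\<^sub>\<infinity>n. hterm k lam nu n z)"
      by (rule infsum_cmult_right')
    also have "(\<Sum>\<^sub>\<infinity>n. hterm k lam nu n z) = g z"
      by (rule infsumI[OF hs])
    finally show ?thesis .
  qed
  have FH: "Fps (exp aa) holomorphic_on UNIV" by (rule Fps_holo[OF Aa])
  have c1: "(\<lambda>z. Fps (exp aa) (exp (cc * z))) holomorphic_on UNIV"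
  proof -
    have "(Fps (exp aa) \<circ> (\<lambda>z. exp (cc * z))) holomorphic_on UNIV"
      by (rule holomorphic_on_compose) (auto intro!: holomorphic_intros intro: holomorphic_on_subset[OF FH])
    then show ?thesis by (simp add: o_def)
  qed
  have c2: "(\<lambda>z. Fps (exp aa) (exp (- cc * z))) holomorphic_on UNIV"
  proof -
    have "(Fps (exp aa) \<circ> (\<lambda>z. exp (- cc * z))) holomorphic_on UNIV"
      by (rule holomorphic_on_compose) (auto intro!: holomorphic_intros intro: holomorphic_on_subset[OF FH])
    then show ?thesis by (simp add: o_def)
  qed
  have "g holomorphic_on UNIV"
    unfolding g_def[abs_def] using c1 c2 by (auto intro!: holomorphic_intros)
  then show ?thesis unfolding hol_sec_def using Geq by blast
qed

lemma omega_lam_Dmu: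
  assumes basis: "omega mu lam = 4 * pi"
  shows "omega lam (of_nat D * mu) = - 4 * pi * real D"
proof -
  have "omega lam (of_real (real D) * mu) = real D * omega lam mu" by (rule omega_scale_right)
  moreover have "omega lam mu = - 4 * pi" using basis omega_swap[of lam mu] by simp
  ultimately show ?thesis by simp
qed

lemma lam_nz: assumes "omega mu lam = 4 * pi" shows "lam \<noteq> 0"
  using assms by (auto simp: omega_def)

lemma Gf_Psi0:
  fixes Psi :: "int \<Rightarrow> complex \<Rightarrow> complex"
  assumes k: "0 < k" and D: "0 < D"
    and basis: "omega mu lam = 4 * pi"
    and Psi_onb: "is_onb (Hspace k (of_nat D * mu) lam) (of_nat D * mu) lam (2 * k * D) Psi"
    and Psi_S: "\<And>n. Tstar k (- lam / of_nat (2 * k * D)) (Psi n)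
                 = (\<lambda>z. exp (\<i> * of_real pi * of_int n / of_nat (k * D)) * Psi n z)"
  shows "\<exists>d. Gf k lam (of_nat D * mu) = (\<lambda>z. d * Psi 0 z)"
proof -
  define nu where "nu = of_nat D * mu"
  have lam: "lam \<noteq> 0" by (rule lam_nz[OF basis])
  have A: "omega lam nu = - 4 * pi * real D" unfolding nu_def by (rule omega_lam_Dmu[OF basis])
  have An: "omega lam nu \<noteq> 0" using A D by simp
  have GH: "Gf k lam nu \<in> Hspace k nu lam"
    unfolding Hspace_def using Gf_hol[OF lam k An] Gf_lattice_inv[OF lam k D A] by blast
  obtain d where d: "Gf k lam nu = (\<lambda>z. \<Sum>n\<in>{0..<int (2*k*D)}. d n * Psi n z)"
    using Psi_onb GH unfolding is_onb_def nu_def by blast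
  define V where "V = - lam / of_nat (2 * k * D)"
  have V: "V = of_real (of_int (-1) / real (2 * k * D)) * lam" by (simp add: V_def)
  have SG: "Tstar k V (Gf k lam nu) = (\<lambda>z. 1 * Gf k lam nu z)"
    unfolding V using Gf_lam_inv[OF lam k D A, of "-1"] by simp
  define w where "w n = exp (\<i> * of_real pi * of_int n / of_nat (k * D))" for n
  have expand: "Gf k lam nu = (\<lambda>z. \<Sum>n\<in>{0..<int (2*k*D)}. d n * w n ^ j * Psi n z)" if "j < 2 * k * D" for j
  proof -
    have "Gf k lam nu = Tstar k (of_nat j * V) (Gf k lam nu)"
      using Tstar_pow_eig[OF SG, of j] by simp
    also have "\<dots> = Tstar k (of_nat j * V) (\<lambda>z. \<Sum>n\<in>{0..<int (2*k*D)}. d n * Psi n z)"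
      using d by simp
    also have "\<dots> = (\<lambda>z. \<Sum>n\<in>{0..<int (2*k*D)}. d n * w n ^ j * Psi n z)"
      by (simp only: Tstar_sum Tstar_cmult V_def Tstar_pow_eig[OF Psi_S] w_def) (simp add: mult_ac)
    finally show ?thesis .
  qed
  have kD: "0 < k * D" using k D by simp
  have Gf2: "Gf k lam nu = (\<lambda>z. \<Sum>n\<in>{0..<int (2*k*D)}. (if w n = 1 then d n * Psi n z else 0))"
    by (rule avg_roots[where N = "2*k*D"]) (use k D expand exp_root_full[OF kD] in \<open>auto simp: w_def mult.assoc\<close>)
  have "Gf k lam nu = (\<lambda>z. d 0 * Psi 0 z)"
  proof
    fix z
    have "Gf k lam nu z = (\<Sum>n\<in>{0..<int (2*k*D)}. (if n = 0 then d n * Psi n z else 0))"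
    proof -
      have "w n = 1 \<longleftrightarrow> n = 0" if "n \<in> {0..<int (2*k*D)}" for n
      proof -
        have "w n = 1 \<longleftrightarrow> int (2*(k*D)) dvd n" unfolding w_def by (rule exp_root_eq_1[OF kD])
        also have "\<dots> \<longleftrightarrow> n = 0"
        proof
          assume "int (2*(k*D)) dvd n"
          then obtain q where q: "n = int (2*(k*D)) * q" by (rule dvdE)
          have p: "0 < int (2*(k*D))" using kD by simp
          have "0 \<le> int (2*(k*D)) * q" using that q by simp
          then have "0 \<le> q" using p by (simp add: zero_le_mult_iff)
          moreover have "int (2*(k*D)) * q < int (2*(k*D)) * 1" using that q by (simp add: mult_ac)
          then have "q < 1" using p by (simp only: mult_less_cancel_left_pos)
          ultimately show "n = 0" using q by simp
        qed simp
        finally show ?thesis .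
      qed
      then show ?thesis using Gf2 by (auto intro!: sum.cong)
    qed
    also have "\<dots> = d 0 * Psi 0 z" using k D by (simp add: sum.delta)
    finally show "Gf k lam nu z = d 0 * Psi 0 z" .
  qed
  then show ?thesis unfolding nu_def by blast
qed

lemma int_bound_j:
  fixes n j :: int and D :: nat
  assumes j1: "1 \<le> j" and jD: "j < int D"
  shows "real (max 1 (nat \<bar>n\<bar>)) \<le> (real_of_int (n * int D + j))^2"
proof -
  define m where "m = n * int D + j"
  have D1: "1 \<le> int D" using j1 jD by simp
  have ii: "1 \<le> \<bar>m\<bar> \<and> \<bar>n\<bar> \<le> \<bar>m\<bar>"
  proof (cases "n \<ge> 0")
    case True
    have "n * 1 \<le> n * int D" using True D1 by (intro mult_left_mono) auto
    then show ?thesis using True j1 unfolding m_def by linarith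
  next
    case False
    have "(- n - 1) * 1 \<le> (- n - 1) * int D" using False D1 by (intro mult_left_mono) auto
    then show ?thesis using False j1 jD unfolding m_def by (simp add: algebra_simps)
  qed
  have "max 1 (nat \<bar>n\<bar>) \<le> nat \<bar>m\<bar>" using ii by (auto simp: max_def)
  then have "real (max 1 (nat \<bar>n\<bar>)) \<le> real_of_int \<bar>m\<bar>" by linarith
  also have "\<dots> \<le> (real_of_int m)^2" by (rule sq_ge_abs_int)
  finally show ?thesis by (simp add: m_def)
qed

lemma termf_summable_on:
  assumes lam: "lam \<noteq> 0" and k: "0 < k" and A: "omega lam nu \<noteq> 0"
  shows "((\<lambda>n. termf k lam nu n z) has_sum Gf k lam nu z) UNIV"
  unfolding Gf_def using termf_summable[OF lam k A] by (simp add: summable_iff_has_sum_infsum)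

lemma Gf_bound_j:
  fixes j :: int
  assumes k: "0 < k" and basis: "omega mu lam = 4 * pi"
    and j1: "1 \<le> j" and jD: "j < int D"
  defines "r \<equiv> exp (- 8 * pi^2 * real k / (cmod lam)^2)"
  shows "cmod (Gf k lam (of_nat D * mu) (of_int j * mu)) \<le> r + 2 * r / (1 - r)"
proof -
  define nu where "nu = of_nat D * mu"
  define L where "L = (cmod lam)^2"
  define c where "c = 8 * pi^2 * real k / L"
  have D: "0 < D" using j1 jD by simp
  have lam: "lam \<noteq> 0" by (rule lam_nz[OF basis])
  have L: "L > 0" using lam by (simp add: L_def)
  have c: "c > 0" using L k by (simp add: c_def)
  have r: "r = exp (- c)" by (simp add: r_def c_def L_def)
  have r0: "0 \<le> r" and r1: "r < 1" using c by (auto simp: r)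
  have A: "omega lam nu = - 4 * pi * real D" unfolding nu_def by (rule omega_lam_Dmu[OF basis])
  have An: "omega lam nu \<noteq> 0" using A D by simp
  have ol: "omega lam mu = - 4 * pi" using basis omega_swap[of lam mu] by simp
  have w: "omega lam (of_int j * mu) = - 4 * pi * of_int j" by (simp add: omega_int_right ol)
  have bnd: "cmod (termf k lam nu n (of_int j * mu)) \<le> r ^ max 1 (nat \<bar>n\<bar>)" for n
  proof -
    have "cmod (termf k lam nu n (of_int j * mu)) = exp (- (real k / 2) * (of_int n * omega lam nu + omega lam (of_int j * mu))^2 / L)"
      by (simp add: norm_termf[OF lam] L_def)
    also have "- (real k / 2) * (of_int n * omega lam nu + omega lam (of_int j * mu))^2 / L = - c * (real_of_int (n * int D + j))^2"
      unfolding A w c_def using L by (simp add: field_simps power2_eq_square)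
    also have "exp (- c * (real_of_int (n * int D + j))^2) \<le> exp (- c * real (max 1 (nat \<bar>n\<bar>)))"
      using int_bound_j[OF j1 jD, of n] c by (simp add: mult_left_mono)
    also have "\<dots> = r ^ max 1 (nat \<bar>n\<bar>)"
      by (simp add: r exp_of_nat_mult[symmetric] mult.commute)
    finally show ?thesis .
  qed
  have "cmod (Gf k lam nu (of_int j * mu)) \<le> r + 2 * r / (1 - r)"
    by (rule norm_infsum_le[OF termf_summable_on[OF lam k An] geom_all_max[OF r0 r1]]) (rule bnd)
  then show ?thesis by (simp add: nu_def)
qed

lemma Gf_bound_0:
  assumes k: "0 < k" and basis: "omega mu lam = 4 * pi" and D: "0 < D"
  defines "r \<equiv> exp (- 8 * pi^2 * real k / (cmod lam)^2)"
  shows "cmod (Gf k lam (of_nat D * mu) 0 - 1) \<le> 2 * r / (1 - r)"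
proof -
  define nu where "nu = of_nat D * mu"
  define L where "L = (cmod lam)^2"
  define c where "c = 8 * pi^2 * real k / L"
  have lam: "lam \<noteq> 0" by (rule lam_nz[OF basis])
  have L: "L > 0" using lam by (simp add: L_def)
  have c: "c > 0" using L k by (simp add: c_def)
  have r: "r = exp (- c)" by (simp add: r_def c_def L_def)
  have r0: "0 \<le> r" and r1: "r < 1" using c by (auto simp: r)
  have A: "omega lam nu = - 4 * pi * real D" unfolding nu_def by (rule omega_lam_Dmu[OF basis])
  have An: "omega lam nu \<noteq> 0" using A D by simp
  have t0: "termf k lam nu 0 0 = 1" by (simp add: termf_def Tstar_def Pf_def)
  have hsU: "((\<lambda>n. termf k lam nu n 0) has_sum Gf k lam nu 0) UNIV"
    by (rule termf_summable_on[OF lam k An])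
  have "(\<lambda>n. termf k lam nu n 0) summable_on (UNIV - {0})"
    by (rule summable_on_subset_banach[OF termf_summable[OF lam k An]]) auto
  then obtain T where hsT: "((\<lambda>n. termf k lam nu n 0) has_sum T) (UNIV - {0})"
    by (auto simp: summable_on_def)
  have "((\<lambda>n. termf k lam nu n 0) has_sum (termf k lam nu 0 0 + T)) (insert 0 (UNIV - {0}))"
    by (rule has_sum_insert[OF _ hsT]) auto
  then have "((\<lambda>n. termf k lam nu n 0) has_sum (1 + T)) UNIV" by (simp add: t0 insert_Diff_if)
  then have GT: "Gf k lam nu 0 = 1 + T" using hsU has_sum_unique by blast
  have bnd: "cmod (termf k lam nu n 0) \<le> r ^ nat \<bar>n\<bar>" for n
  proof -
    have D1: "1 \<le> real D" using D by simp
    have "real_of_int \<bar>n\<bar> \<le> (real_of_int n)^2" by (rule sq_ge_abs_int)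
    also have "\<dots> \<le> (real D)^2 * (real_of_int n)^2"
      using mult_right_mono[OF one_le_power[OF D1, of 2], of "(real_of_int n)^2"] by simp
    finally have nn: "real (nat \<bar>n\<bar>) \<le> (real D)^2 * (real_of_int n)^2" by simp
    have "cmod (termf k lam nu n 0) = exp (- (real k / 2) * (of_int n * omega lam nu + omega lam 0)^2 / L)"
      by (simp add: norm_termf[OF lam] L_def)
    also have "- (real k / 2) * (of_int n * omega lam nu + omega lam 0)^2 / L = - c * ((real D)^2 * (real_of_int n)^2)"
      unfolding A c_def using L by (simp add: field_simps power2_eq_square)
    also have "exp (- c * ((real D)^2 * (real_of_int n)^2)) \<le> exp (- c * real (nat \<bar>n\<bar>))"
      using nn c by (simp add: mult_left_mono)
    also have "\<dots> = r ^ nat \<bar>n\<bar>"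
      by (simp add: r exp_of_nat_mult[symmetric] mult.commute)
    finally show ?thesis .
  qed
  have "cmod T \<le> 2 * r / (1 - r)"
    by (rule norm_infsum_le[OF hsT geom_nz[OF r0 r1]]) (rule bnd)
  then show ?thesis using GT by (simp add: nu_def)
qed

lemma O_inf_le:
  assumes f1: "O_inf f1" and f2: "O_inf f2" and f3: "O_inf f3"
    and ev: "eventually (\<lambda>k. cmod (g k) \<le> A1 * cmod (f1 k) + A2 * cmod (f2 k) + A3 * cmod (f3 k)) sequentially"
    and A: "A1 \<ge> 0" "A2 \<ge> 0" "A3 \<ge> 0"
  shows "O_inf g"
  unfolding O_inf_def
proof
  fix N :: nat
  obtain C1 where C1: "\<forall>\<^sub>F k in sequentially. cmod (f1 k) \<le> C1 * real k powr (- real N)"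
    using f1 unfolding O_inf_def by blast
  obtain C2 where C2: "\<forall>\<^sub>F k in sequentially. cmod (f2 k) \<le> C2 * real k powr (- real N)"
    using f2 unfolding O_inf_def by blast
  obtain C3 where C3: "\<forall>\<^sub>F k in sequentially. cmod (f3 k) \<le> C3 * real k powr (- real N)"
    using f3 unfolding O_inf_def by blast
  have "\<forall>\<^sub>F k in sequentially. cmod (g k) \<le> (A1 * C1 + A2 * C2 + A3 * C3) * real k powr (- real N)"
    using C1 C2 C3 ev
  proof eventually_elim
    case (elim k)
    have "A1 * cmod (f1 k) \<le> A1 * (C1 * real k powr (- real N))" using elim A by (intro mult_left_mono) auto
    moreover have "A2 * cmod (f2 k) \<le> A2 * (C2 * real k powr (- real N))" using elim A by (intro mult_left_mono) auto
    moreover have "A3 * cmod (f3 k) \<le> A3 * (C3 * real k powr (- real N))" using elim A by (intro mult_left_mono) auto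
    ultimately show ?case using elim(4) by (simp add: algebra_simps)
  qed
  then show "\<exists>C. \<forall>\<^sub>F k in sequentially. cmod (g k) \<le> C * real k powr (- real N)" by blast
qed

lemma exp_ge_pow:
  fixes x :: real assumes x: "0 \<le> x" and M: "0 < M"
  shows "(x / real M) ^ M \<le> exp x"
proof -
  have "(x / real M) ^ M \<le> (1 + x / real M) ^ M"
    using x M by (intro power_mono) auto
  also have "\<dots> \<le> exp (x / real M) ^ M"
    using x M by (intro power_mono exp_ge_add_one_self) auto
  also have "\<dots> = exp (real M * (x / real M))" by (rule exp_of_nat_mult[symmetric])
  also have "\<dots> = exp x" using M by simp
  finally show ?thesis .
qed

lemma O_inf_exp:
  assumes c: "c > 0"
  shows "O_inf (\<lambda>k. complex_of_real (exp (- c * real k)))"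
  unfolding O_inf_def
proof
  fix N :: nat
  define M where "M = Suc N"
  have "\<forall>\<^sub>F k in sequentially. cmod (complex_of_real (exp (- c * real k))) \<le> (real M / c) ^ M * real k powr (- real N)"
    using eventually_ge_at_top[of 1]
  proof eventually_elim
    case (elim k)
    have k1: "1 \<le> real k" using elim by simp
    have kp: "0 < real k" using k1 by simp
    have pos: "0 < (c * real k / real M) ^ M" using c kp by (simp add: M_def)
    have "exp (- c * real k) = 1 / exp (c * real k)" by (simp add: exp_minus field_simps)
    also have "\<dots> \<le> 1 / (c * real k / real M) ^ M"
      using exp_ge_pow[of "c * real k" M] c kp pos by (intro divide_left_mono) (auto simp: M_def)
    also have "\<dots> = (real M / c) ^ M / real k ^ M"
      using c kp by (simp add: power_divide power_mult_distrib field_simps)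
    also have "\<dots> \<le> (real M / c) ^ M / real k ^ N"
    proof (rule divide_left_mono)
      show "real k ^ N \<le> real k ^ M" using k1 by (intro power_increasing) (auto simp: M_def)
    qed (use c kp in auto)
    also have "\<dots> = (real M / c) ^ M * real k powr (- real N)"
      using kp by (simp add: powr_minus powr_realpow divide_inverse)
    finally show ?case by simp
  qed
  then show "\<exists>C. \<forall>\<^sub>F k in sequentially. cmod (complex_of_real (exp (- c * real k))) \<le> C * real k powr (- real N)" by blast
qed

lemma O_inf_tendsto0:
  assumes "O_inf f" shows "f \<longlonglongrightarrow> 0"
proof -
  obtain C where C: "\<forall>\<^sub>F k in sequentially. cmod (f k) \<le> C * real k powr (- real 1)"
    using assms unfolding O_inf_def by blast
  have "(\<lambda>k. C * real k powr (- real 1)) \<longlonglongrightarrow> C * 0"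
    by (intro tendsto_mult tendsto_const tendsto_neg_powr filterlim_real_sequentially) auto
  then have "(\<lambda>k. C * real k powr (- real 1)) \<longlonglongrightarrow> 0" by simp
  then show ?thesis
    by (rule Lim_null_comparison[OF C])
qed

lemma final_est:
  fixes B p Z Om E1 E2 sig :: complex and kap :: real
  assumes Zeq: "Z = B * (p * (1 + sig))"
    and p: "p = exp (\<i> * of_real pi / 4) * of_real kap * Om + E1"
    and Z: "Z = exp (3 * \<i> * of_real pi / 4) / of_real (sqrt 2) * of_real kap * Om + E2"
    and sig: "cmod sig \<le> 1/2" and E1: "cmod E1 \<le> kap * cmod Om / 2"
    and kap: "kap > 0" and Om: "Om \<noteq> 0"
  shows "cmod (B - \<i> / of_real (sqrt 2)) \<le> 4 * (cmod E2 + 2 * cmod E1) / (kap * cmod Om) + 4 * cmod sig"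
proof -
  have e3: "exp (3 * \<i> * of_real pi / 4) = \<i> * exp (\<i> * of_real pi / 4)"
  proof -
    have "exp (3 * \<i> * of_real pi / 4) = exp (\<i> * of_real (pi / 2) + \<i> * of_real pi / 4)"
      by (simp add: field_simps)
    also have "\<dots> = \<i> * exp (\<i> * of_real pi / 4)"
      by (simp only: exp_add cis_conv_exp[symmetric] cis_pi_half)
    finally show ?thesis .
  qed
  define K where "K = kap * cmod Om"
  have K: "K > 0" using kap Om by (simp add: K_def)
  have s2: "sqrt 2 \<ge> 1" by simp
  have np: "cmod p \<ge> K / 2"
  proof -
    have "cmod (exp (\<i> * of_real pi / 4) * of_real kap * Om) = K"
      using kap by (simp add: K_def norm_mult norm_exp_i_times[of "pi / 4", simplified] abs_of_pos)
    then show ?thesis using p E1 norm_triangle_ineq2[of "exp (\<i> * of_real pi / 4) * of_real kap * Om" "- E1"]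
      by (simp add: K_def)
  qed
  have n1s: "cmod (1 + sig) \<ge> 1/2"
    using norm_triangle_ineq2[of 1 "- sig"] sig by simp
  have den: "cmod (p * (1 + sig)) \<ge> K / 4"
  proof -
    have "K / 4 = (K / 2) * (1/2)" by simp
    also have "\<dots> \<le> cmod p * cmod (1 + sig)" using np n1s K by (intro mult_mono) auto
    finally show ?thesis by (simp add: norm_mult)
  qed
  have key: "(B - \<i> / of_real (sqrt 2)) * (p * (1 + sig)) =
      E2 - exp (3 * \<i> * of_real pi / 4) / of_real (sqrt 2) * of_real kap * Om * sig - \<i> / of_real (sqrt 2) * E1 * (1 + sig)"
  proof -
    have "(B - \<i> / of_real (sqrt 2)) * (p * (1 + sig)) = Z - \<i> / of_real (sqrt 2) * (p * (1 + sig))"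
      using Zeq by (simp add: algebra_simps)
    also have "\<dots> = E2 - exp (3 * \<i> * of_real pi / 4) / of_real (sqrt 2) * of_real kap * Om * sig - \<i> / of_real (sqrt 2) * E1 * (1 + sig)"
      unfolding Z p e3 by (simp add: algebra_simps add_divide_distrib)
    finally show ?thesis .
  qed
  have num: "cmod (E2 - exp (3 * \<i> * of_real pi / 4) / of_real (sqrt 2) * of_real kap * Om * sig - \<i> / of_real (sqrt 2) * E1 * (1 + sig))
      \<le> cmod E2 + K * cmod sig + 2 * cmod E1"
  proof -
    have a: "cmod (exp (3 * \<i> * of_real pi / 4) / of_real (sqrt 2) * of_real kap * Om * sig) \<le> K * cmod sig"
    proof -
      have "cmod (exp (3 * \<i> * of_real pi / 4)) = 1"
        using norm_exp_i_times[of "3 * pi / 4"] by (simp add: field_simps)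
      then have "cmod (exp (3 * \<i> * of_real pi / 4) / of_real (sqrt 2) * of_real kap * Om * sig) = K * cmod sig / sqrt 2"
        using kap by (simp add: norm_mult norm_divide K_def abs_of_pos)
      also have "\<dots> \<le> K * cmod sig"
      proof -
        have h: "K * cmod sig * 1 \<le> K * cmod sig * sqrt 2" by (rule mult_left_mono[OF s2]) (use K in simp)
        then show ?thesis by (simp add: divide_le_eq)
      qed
      finally show ?thesis .
    qed
    have b: "cmod (\<i> / of_real (sqrt 2) * E1 * (1 + sig)) \<le> 2 * cmod E1"
    proof -
      have "cmod (1 + sig) \<le> 2" using norm_triangle_ineq[of 1 sig] sig by simp
      moreover have "cmod (\<i> / of_real (sqrt 2)) \<le> 1" using s2 by (simp add: norm_divide)
      ultimately have "cmod (\<i> / of_real (sqrt 2)) * cmod E1 * cmod (1 + sig) \<le> 1 * cmod E1 * 2"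
        by (intro mult_mono) auto
      moreover have "cmod (\<i> / of_real (sqrt 2) * E1 * (1 + sig)) = cmod (\<i> / of_real (sqrt 2)) * cmod E1 * cmod (1 + sig)"
        by (simp only: norm_mult)
      ultimately show ?thesis by simp
    qed
    show ?thesis using a b norm_triangle_ineq4 norm_triangle_ineq[of E2] by (smt (verit) norm_triangle_ineq4)
  qed
  have "cmod (B - \<i> / of_real (sqrt 2)) * (K / 4) \<le> cmod (B - \<i> / of_real (sqrt 2)) * cmod (p * (1 + sig))"
    using den by (intro mult_left_mono) auto
  also have "\<dots> \<le> cmod E2 + K * cmod sig + 2 * cmod E1"
    using num key by (simp add: norm_mult[symmetric])
  finally have "cmod (B - \<i> / of_real (sqrt 2)) \<le> (cmod E2 + K * cmod sig + 2 * cmod E1) / (K / 4)"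
    using K by (simp add: field_simps)
  also have "\<dots> = 4 * (cmod E2 + 2 * cmod E1) / K + 4 * cmod sig"
    using K by (simp add: field_simps)
  finally show ?thesis by (simp add: K_def)
qed

lemma sigma_part:
  fixes Psi :: "int \<Rightarrow> complex \<Rightarrow> complex"
  assumes k: "0 < k" and D: "0 < D"
    and basis: "omega mu lam = 4 * pi"
    and Psi_onb: "is_onb (Hspace k (of_nat D * mu) lam) (of_nat D * mu) lam (2 * k * D) Psi"
    and Psi_S: "\<And>n. Tstar k (- lam / of_nat (2 * k * D)) (Psi n)
                 = (\<lambda>z. exp (\<i> * of_real pi * of_int n / of_nat (k * D)) * Psi n z)"
    and r: "exp (- 8 * pi^2 * real k / (cmod lam)^2) \<le> 1 / (48 * real D)"
  shows "\<exists>sig. (\<Sum>j\<in>{0..<int D}. Psi 0 (of_int j * mu)) = Psi 0 0 * (1 + sig)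
            \<and> cmod sig \<le> 12 * real D * exp (- 8 * pi^2 * real k / (cmod lam)^2)"
proof -
  define rr where "rr = exp (- 8 * pi^2 * real k / (cmod lam)^2)"
  define G where "G = Gf k lam (of_nat D * mu)"
  obtain d where d: "G = (\<lambda>z. d * Psi 0 z)"
    using Gf_Psi0[OF k D basis Psi_onb Psi_S] unfolding G_def by blast
  have rr0: "0 \<le> rr" by (simp add: rr_def)
  have D1: "1 \<le> real D" using D by simp
  have rr1: "rr \<le> 1/48"
  proof -
    have "1 / (48 * real D) \<le> 1 / 48" using D1 by (simp add: divide_le_eq)
    then show ?thesis using r by (simp add: rr_def)
  qed
  have q: "2 * rr / (1 - rr) \<le> 3 * rr"
  proof -
    have "rr * (3 * rr) \<le> rr * 1" using rr0 rr1 by (intro mult_left_mono) auto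
    then have "2 * rr \<le> 3 * rr * (1 - rr)" by (simp add: algebra_simps)
    moreover have "0 < 1 - rr" using rr1 by simp
    ultimately show ?thesis by (simp add: divide_le_eq)
  qed
  have G0: "cmod (G 0 - 1) \<le> 3 * rr"
    using Gf_bound_0[OF k basis D] q by (simp add: G_def rr_def)
  have G0b: "cmod (G 0) \<ge> 1/2"
  proof -
    have "1 - cmod (G 0 - 1) \<le> cmod (G 0)" using norm_triangle_ineq2[of 1 "1 - G 0"] by (simp add: norm_minus_commute)
    then show ?thesis using G0 rr1 by linarith
  qed
  have Gj: "cmod (G (of_int j * mu)) \<le> 4 * rr" if "j \<in> {1..<int D}" for j
    using Gf_bound_j[OF k basis, of j D] that q by (simp add: G_def rr_def)
  have G0nz: "G 0 \<noteq> 0" using G0b by auto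
  have dnz: "d \<noteq> 0" using G0nz d by auto
  define sig where "sig = (\<Sum>j\<in>{1..<int D}. G (of_int j * mu) / G 0)"
  have psi: "Psi 0 z = G z / d" for z using d dnz by simp
  have "(\<Sum>j\<in>{0..<int D}. Psi 0 (of_int j * mu)) = Psi 0 0 + (\<Sum>j\<in>{1..<int D}. Psi 0 (of_int j * mu))"
  proof -
    have "{0..<int D} = insert 0 {1..<int D}" using D by auto
    then show ?thesis by simp
  qed
  also have "(\<Sum>j\<in>{1..<int D}. Psi 0 (of_int j * mu)) = Psi 0 0 * sig"
    unfolding sig_def sum_distrib_left by (rule sum.cong) (use G0nz dnz in \<open>auto simp: psi\<close>)
  finally have eq: "(\<Sum>j\<in>{0..<int D}. Psi 0 (of_int j * mu)) = Psi 0 0 * (1 + sig)" by (simp add: algebra_simps)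
  have "cmod sig \<le> (\<Sum>j\<in>{1..<int D}. cmod (G (of_int j * mu) / G 0))"
    unfolding sig_def by (rule norm_sum)
  also have "\<dots> \<le> (\<Sum>j\<in>{1..<int D}. 8 * rr)"
  proof (rule sum_mono)
    fix j assume j: "j \<in> {1..<int D}"
    have "cmod (G (of_int j * mu) / G 0) = cmod (G (of_int j * mu)) / cmod (G 0)" by (simp add: norm_divide)
    also have "\<dots> \<le> (4 * rr) / (1/2)"
      using Gj[OF j] G0b rr0 by (intro frac_le) auto
    finally show "cmod (G (of_int j * mu) / G 0) \<le> 8 * rr" by simp
  qed
  also have "\<dots> = real (nat (int D - 1)) * (8 * rr)" by simp
  also have "\<dots> \<le> real D * (8 * rr)" using rr0 by (intro mult_right_mono) auto
  also have "\<dots> \<le> 12 * real D * rr" using rr0 D1 by simp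
  finally show ?thesis using eq unfolding rr_def by blast
qed

theorem mainTheorem5:
  fixes a b :: nat and lam mu Om_mu Om_lam :: complex
    and xi :: "nat \<Rightarrow> int \<Rightarrow> complex \<Rightarrow> complex"
    and Psi :: "nat \<Rightarrow> int \<Rightarrow> complex \<Rightarrow> complex"
    and Z0 :: "nat \<Rightarrow> complex \<Rightarrow> complex"
    and D :: nat
  assumes ab: "0 < a" "0 < b" "coprime a b"
    and D_def: "D = 2 * a * b"
    and basis: "omega mu lam = 4 * pi"
    and Om_mu: "phi_sq Om_mu mu = 1"
    and Om_lam: "phi_sq Om_lam lam = 1"
    and xi_onb: "\<And>k. 0 < k \<Longrightarrow> is_onb (Hspace k lam mu) lam mu (2 * k) (xi k)"
    and xi_M: "\<And>k l. 0 < k \<Longrightarrow> Tstar k (mu / of_nat (2 * k)) (xi k l)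
                 = (\<lambda>z. exp (\<i> * of_real pi * of_int l / of_nat k) * xi k l z)"
    and xi_L: "\<And>k l. 0 < k \<Longrightarrow> Tstar k (- lam / of_nat (2 * k)) (xi k l) = xi k (l - 1)"
    and xi_0: "\<And>k. 0 < k \<Longrightarrow> \<exists>r>0. xi k 0 0 = of_real r * Om_mu"
    and Z0_def: "\<And>k. Z0 k = (\<lambda>z. - \<i> / of_real (2 * sqrt (real k)) * (\<Sum>l\<in>{0..<int (2 * k)}. xi k l z))"
    and Om_lam_sign: "O_inf (\<lambda>k. Z0 k 0 - exp (3 * \<i> * of_real pi / 4) / of_real (sqrt 2)
                          * of_real ((real k / (2 * pi)) powr (1 / 4)) * Om_lam)"
    and Psi_onb: "\<And>k. 0 < k \<Longrightarrow> is_onb (Hspace k (of_nat D * mu) lam) (of_nat D * mu) lam (2 * k * D) (Psi k)"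
    and Psi_S: "\<And>k n. 0 < k \<Longrightarrow> Tstar k (- lam / of_nat (2 * k * D)) (Psi k n)
                 = (\<lambda>z. exp (\<i> * of_real pi * of_int n / of_nat (k * D)) * Psi k n z)"
    and Psi_R: "\<And>k n. 0 < k \<Longrightarrow> Tstar k ((of_nat D * mu - 2 * lam) / of_nat (2 * k * D)) (Psi k n)
                 = Psi k (n + 1)"
    and Psi_0: "O_inf (\<lambda>k. Psi k 0 0 - exp (\<i> * of_real pi / 4)
                          * of_real ((real k / (2 * pi)) powr (1 / 4)) * Om_lam)"
  shows "\<exists>alpha :: nat \<Rightarrow> int \<Rightarrow> complex.
           (\<forall>k>0. Z0 k = (\<lambda>z. \<Sum>m\<in>{0..<int D}. alpha k m * Psi k (2 * int k * m) z))
           \<and> O_inf (\<lambda>k. alpha k 0 - \<i> / of_real (sqrt 2))"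
proof -
  have D: "0 < D" using ab D_def by simp
  have lam: "lam \<noteq> 0" by (rule lam_nz[OF basis])
  have "\<forall>k. \<exists>B. 0 < k \<longrightarrow> Z0 k = (\<lambda>z. B * (\<Sum>j\<in>{0..<int D}. Tstar k (of_int j * mu) (Psi k 0) z))"
  proof
    fix k :: nat
    show "\<exists>B. 0 < k \<longrightarrow> Z0 k = (\<lambda>z. B * (\<Sum>j\<in>{0..<int D}. Tstar k (of_int j * mu) (Psi k 0) z))"
    proof (cases "0 < k")
      case True
      show ?thesis
        using part1[OF True D basis xi_onb[OF True] xi_L[OF True] Z0_def[of k] Psi_onb[OF True] Psi_S[OF True] Psi_R[OF True]]
        by blast
    qed simp
  qed
  then obtain Bf where Bf: "\<And>k. 0 < k \<Longrightarrow> Z0 k = (\<lambda>z. Bf k * (\<Sum>j\<in>{0..<int D}. Tstar k (of_int j * mu) (Psi k 0) z))"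
    by metis
  define alpha where "alpha k m = Bf k * exp (- (4 * of_real pi * \<i> * of_nat k * of_int m ^ 2 / of_nat D))" for k :: nat and m :: int
  have rep: "Z0 k = (\<lambda>z. \<Sum>m\<in>{0..<int D}. alpha k m * Psi k (2 * int k * m) z)" if k: "0 < k" for k
  proof
    fix z
    have "Z0 k z = (\<Sum>j\<in>{0..<int D}. Bf k * Tstar k (of_int j * mu) (Psi k 0) z)"
      using Bf[OF k] by (simp add: sum_distrib_left)
    also have "\<dots> = (\<Sum>m\<in>{0..<int D}. alpha k m * Psi k (2 * int k * m) z)"
    proof (rule sum.cong[OF refl])
      fix m assume m: "m \<in> {0..<int D}"
      define m' where "m' = nat m"
      have mm: "m = int m'" using m by (simp add: m'_def)
      have "Tstar k (of_int m * mu) (Psi k 0) = Tstar k (of_nat m' * mu) (Psi k 0)" by (simp add: mm)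
      also have "\<dots> = (\<lambda>z. exp (- (4 * of_real pi * \<i> * of_nat k * of_nat m' ^ 2 / of_nat D)) * Psi k (2 * int k * int m') z)"
        by (rule Phi_rel[OF k D basis Psi_S[OF k] Psi_R[OF k]])
      finally show "Bf k * Tstar k (of_int m * mu) (Psi k 0) z = alpha k m * Psi k (2 * int k * m) z"
        by (simp add: alpha_def mm)
    qed
    finally show "Z0 k z = (\<Sum>m\<in>{0..<int D}. alpha k m * Psi k (2 * int k * m) z)" .
  qed
  define kap where "kap k = (real k / (2 * pi)) powr (1 / 4)" for k :: nat
  define kap1 where "kap1 = (1 / (2 * pi)) powr (1 / 4 :: real)"
  define c where "c = 8 * pi^2 / (cmod lam)^2"
  define E1 where "E1 k = Psi k 0 0 - exp (\<i> * of_real pi / 4) * of_real (kap k) * Om_lam" for k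
  define E2 where "E2 k = Z0 k 0 - exp (3 * \<i> * of_real pi / 4) / of_real (sqrt 2) * of_real (kap k) * Om_lam" for k
  have OE1: "O_inf E1" using Psi_0 unfolding E1_def[abs_def] kap_def by simp
  have OE2: "O_inf E2" using Om_lam_sign unfolding E2_def[abs_def] kap_def by simp
  have Om: "Om_lam \<noteq> 0" using Om_lam by (auto simp: phi_sq_def)
  have kap1: "kap1 > 0" by (simp add: kap1_def)
  have c: "c > 0" using lam by (simp add: c_def)
  have K1: "kap1 * cmod Om_lam > 0" using kap1 Om by simp
  have Or: "O_inf (\<lambda>k. complex_of_real (exp (- c * real k)))" by (rule O_inf_exp[OF c])
  have ev_r: "eventually (\<lambda>k. cmod (complex_of_real (exp (- c * real k))) < 1 / (48 * real D)) sequentially"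
    using O_inf_tendsto0[OF Or] D by (auto simp: tendsto_iff dist_norm)
  have ev_E1: "eventually (\<lambda>k. cmod (E1 k) < kap1 * cmod Om_lam / 2) sequentially"
  proof -
    have A: "\<forall>e>0. eventually (\<lambda>x. cmod (E1 x) < e) sequentially"
      using O_inf_tendsto0[OF OE1] by (simp add: tendsto_iff dist_norm)
    have h: "kap1 * cmod Om_lam / 2 > 0" using K1 by simp
    show ?thesis using A[rule_format, OF h] .
  qed
  have ev: "eventually (\<lambda>k. cmod (alpha k 0 - \<i> / of_real (sqrt 2)) \<le>
       (4 / (kap1 * cmod Om_lam)) * cmod (E2 k) + (8 / (kap1 * cmod Om_lam)) * cmod (E1 k)
       + (48 * real D) * cmod (complex_of_real (exp (- c * real k)))) sequentially"
    using ev_r ev_E1 eventually_ge_at_top[of 1]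
  proof eventually_elim
    case (elim k)
    have k: "0 < k" using elim(3) by simp
    have rk: "exp (- 8 * pi^2 * real k / (cmod lam)^2) = exp (- c * real k)" by (simp add: c_def)
    have rle: "exp (- 8 * pi^2 * real k / (cmod lam)^2) \<le> 1 / (48 * real D)"
      using elim(1) rk by simp
    obtain sig where sig: "(\<Sum>j\<in>{0..<int D}. Psi k 0 (of_int j * mu)) = Psi k 0 0 * (1 + sig)"
        and sigb: "cmod sig \<le> 12 * real D * exp (- 8 * pi^2 * real k / (cmod lam)^2)"
      using sigma_part[OF k D basis Psi_onb[OF k] Psi_S[OF k] rle] by blast
    have kapk: "kap k \<ge> kap1"
      unfolding kap_def kap1_def using elim(3) by (intro powr_mono2) (auto simp: divide_right_mono)
    have kpos: "kap k > 0" using kapk kap1 by simp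
    have sig2: "cmod sig \<le> 1/2"
    proof -
      have "12 * real D * exp (- 8 * pi^2 * real k / (cmod lam)^2) \<le> 12 * real D * (1 / (48 * real D))"
        using rle D by (intro mult_left_mono) auto
      also have "\<dots> = 1/4" using D by simp
      finally show ?thesis using sigb by simp
    qed
    have E1b: "cmod (E1 k) \<le> kap k * cmod Om_lam / 2"
    proof -
      have mm: "kap1 * cmod Om_lam \<le> kap k * cmod Om_lam" by (rule mult_right_mono[OF kapk]) simp
      show ?thesis using elim(2) mm by linarith
    qed
    have Zeq: "Z0 k 0 = Bf k * (Psi k 0 0 * (1 + sig))"
      using Bf[OF k] sig by (simp add: Tstar_at0)
    have fe: "cmod (Bf k - \<i> / of_real (sqrt 2)) \<le> 4 * (cmod (E2 k) + 2 * cmod (E1 k)) / (kap k * cmod Om_lam) + 4 * cmod sig"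
      by (rule final_est[OF Zeq _ _ sig2 E1b kpos Om]) (simp_all add: E1_def E2_def)
    have "4 * (cmod (E2 k) + 2 * cmod (E1 k)) / (kap k * cmod Om_lam) \<le> 4 * (cmod (E2 k) + 2 * cmod (E1 k)) / (kap1 * cmod Om_lam)"
      using K1 kapk Om kpos by (intro divide_left_mono mult_right_mono) (auto intro!: mult_pos_pos)
    moreover have "4 * cmod sig \<le> (48 * real D) * cmod (complex_of_real (exp (- c * real k)))"
      using sigb rk by simp
    moreover have "alpha k 0 = Bf k" by (simp add: alpha_def)
    ultimately show ?case using fe by (simp add: field_simps add_divide_distrib)
  qed
  have "O_inf (\<lambda>k. alpha k 0 - \<i> / of_real (sqrt 2))"
    by (rule O_inf_le[OF OE2 OE1 Or ev]) (use K1 in auto)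
  then show ?thesis using rep by blast
qed

end
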